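(* For every $\Delta^0_2$ set $X$ with $\emptyset'\not\leq_T X$, there exists a $\Delta^0_2$ function $f:\omega\to\omega$ such that $X$ computes no function $g:\omega\to\omega$ with $g(x)\neq f(x)$ for all $x\in\omega$.
   Context: A set or function is $\Delta^0_2$ if it is computable from $\emptyset'$. A function $g$ with $g(x)\neq f(x)$ for all $x$ is called $f$-diagonalizing. *)

theory Defs
  imports Main "HOL-Library.Nat_Bijection"
begin

text \<open>Programs for partial recursive functions relative to an oracle
(Kleene's mu-recursive functions with an oracle function symbol).\<close>

datatype rf = Zero | Succ | Proj nat | Oracle | Comp rf "rf list" | Prim rf rf | Mu rf

inductive evalo :: "(nat \<Rightarrow> nat) \<Rightarrow> rf \<Rightarrow> nat list \<Rightarrow> nat \<Rightarrow> bool"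
  for orc :: "nat \<Rightarrow> nat" where
  ev_zero: "evalo orc Zero xs 0"
| ev_succ: "evalo orc Succ (x # xs) (Suc x)"
| ev_proj: "i < length xs \<Longrightarrow> evalo orc (Proj i) xs (xs ! i)"
| ev_oracle: "evalo orc Oracle (x # xs) (orc x)"
| ev_comp: "list_all2 (\<lambda>g y. evalo orc g xs y) gs ys \<Longrightarrow> evalo orc f ys z \<Longrightarrow> evalo orc (Comp f gs) xs z"
| ev_prim0: "evalo orc f xs z \<Longrightarrow> evalo orc (Prim f g) (0 # xs) z"
| ev_primS: "evalo orc (Prim f g) (n # xs) y \<Longrightarrow> evalo orc g (n # y # xs) z \<Longrightarrow> evalo orc (Prim f g) (Suc n # xs) z"
| ev_mu: "evalo orc f (n # xs) 0 \<Longrightarrow> (\<forall>m<n. \<exists>v. evalo orc f (m # xs) (Suc v)) \<Longrightarrow> evalo orc (Mu f) xs n"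

primrec enc :: "rf \<Rightarrow> nat" where
  "enc Zero = prod_encode (0, 0)"
| "enc Succ = prod_encode (1, 0)"
| "enc (Proj i) = prod_encode (2, i)"
| "enc Oracle = prod_encode (3, 0)"
| "enc (Comp f gs) = prod_encode (4, prod_encode (enc f, list_encode (map enc gs)))"
| "enc (Prim f g) = prod_encode (5, prod_encode (enc f, enc g))"
| "enc (Mu f) = prod_encode (6, enc f)"

definition chi :: "nat set \<Rightarrow> nat \<Rightarrow> nat" where
  "chi A n = (if n \<in> A then 1 else 0)"

definition comp_by :: "(nat \<Rightarrow> nat) \<Rightarrow> (nat \<Rightarrow> nat) \<Rightarrow> bool" where
  "comp_by orc f \<longleftrightarrow> (\<exists>p. \<forall>x. evalo orc p [x] (f x))"

definition turing_le :: "nat set \<Rightarrow> nat set \<Rightarrow> bool" where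
  "turing_le A B \<longleftrightarrow> comp_by (chi B) (chi A)"

text \<open>The halting set emptyset' = {e. phi_e(e) converges} (unrelativised: oracle constantly 0).\<close>
definition halting :: "nat set" where
  "halting = {n. \<exists>p. enc p = n \<and> (\<exists>v. evalo (\<lambda>_. 0) p [n] v)}"

definition Delta02_fun :: "(nat \<Rightarrow> nat) \<Rightarrow> bool" where
  "Delta02_fun f \<longleftrightarrow> comp_by (chi halting) f"

definition Delta02_set :: "nat set \<Rightarrow> bool" where
  "Delta02_set X \<longleftrightarrow> Delta02_fun (chi X)"

end

theory Submission
  imports Defs
begin

datatype ex = V nat | Z | S ex | Fn "nat \<Rightarrow> nat" ex | Cp ex "ex list" | Rec ex ex ex

primrec eval :: "ex \<Rightarrow> nat list \<Rightarrow> nat" where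
  "eval (V i) env = env ! i"
| "eval Z env = 0"
| "eval (S e) env = Suc (eval e env)"
| "eval (Fn F e) env = F (eval e env)"
| "eval (Cp e as) env = eval e (map (\<lambda>a. eval a env) as)"
| "eval (Rec n b s) env = rec_nat (eval b env) (\<lambda>i acc. eval s (i # acc # env)) (eval n env)"

primrec wfx :: "nat \<Rightarrow> ex \<Rightarrow> bool" where
  "wfx k (V i) = (i < k)"
| "wfx k Z = True"
| "wfx k (S e) = wfx k e"
| "wfx k (Fn F e) = wfx k e"
| "wfx k (Cp e as) = (wfx (length as) e \<and> list_all (wfx k) as)"
| "wfx k (Rec n b s) = (wfx k n \<and> wfx k b \<and> wfx (Suc (Suc k)) s)"

primrec fok :: "(nat \<Rightarrow> nat) \<Rightarrow> ex \<Rightarrow> bool" where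
  "fok orc (V i) = True"
| "fok orc Z = True"
| "fok orc (S e) = fok orc e"
| "fok orc (Fn F e) = (comp_by orc F \<and> fok orc e)"
| "fok orc (Cp e as) = (fok orc e \<and> list_all (fok orc) as)"
| "fok orc (Rec n b s) = (fok orc n \<and> fok orc b \<and> fok orc s)"

lemma prim_eval:
  assumes b: "evalo orc pb env bv"
    and s: "\<And>i acc. evalo orc ps (i # acc # env) (sf i acc)"
  shows "evalo orc (Prim pb ps) (n # env) (rec_nat bv sf n)"
proof (induction n)
  case 0 then show ?case using b by (simp add: ev_prim0)
next
  case (Suc n) then show ?case using s by (auto intro: ev_primS)
qed

lemma proj_list:
  "list_all2 (\<lambda>g y. evalo orc g env y) (map Proj [0..<length env]) env"
  by (auto simp: list_all2_conv_all_nth intro: ev_proj)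

lemma choose_progs:
  assumes "\<forall>a\<in>set as. \<exists>p. \<forall>env. length env = k \<longrightarrow> evalo orc p env (eval a env)"
  shows "\<exists>ps. \<forall>env. length env = k \<longrightarrow> list_all2 (\<lambda>g y. evalo orc g env y) ps (map (\<lambda>a. eval a env) as)"
  using assms
proof (induction as)
  case Nil then show ?case by auto
next
  case (Cons a as)
  then obtain ps where ps: "\<forall>env. length env = k \<longrightarrow> list_all2 (\<lambda>g y. evalo orc g env y) ps (map (\<lambda>a. eval a env) as)" by auto
  from Cons.prems obtain p where "\<forall>env. length env = k \<longrightarrow> evalo orc p env (eval a env)" by auto
  with ps show ?case by (intro exI[of _ "p # ps"]) auto
qed

lemma compile:
  "wfx k e \<Longrightarrow> fok orc e \<Longrightarrow> \<exists>p. \<forall>env. length env = k \<longrightarrow> evalo orc p env (eval e env)"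
proof (induction e arbitrary: k)
  case (V i) then show ?case by (auto intro!: exI[of _ "Proj i"] ev_proj)
next
  case Z then show ?case by (auto intro!: exI[of _ "Zero"] ev_zero)
next
  case (S e)
  then obtain p where p: "\<forall>env. length env = k \<longrightarrow> evalo orc p env (eval e env)" using S.IH[of k] S.prems by fastforce
  show ?case
    by (rule exI[of _ "Comp Succ [p]"]) (auto intro!: ev_comp[where ys="[_]"] ev_succ p[rule_format])
next
  case (Fn F e)
  then obtain p where p: "\<forall>env. length env = k \<longrightarrow> evalo orc p env (eval e env)" using Fn.IH[of k] Fn.prems by fastforce
  from Fn obtain q where q: "\<forall>x. evalo orc q [x] (F x)" by (auto simp: comp_by_def)
  show ?case
    by (rule exI[of _ "Comp q [p]"]) (auto intro!: ev_comp[where ys="[_]"] q[rule_format] p[rule_format])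
next
  case (Cp e as)
  then obtain p where p: "\<forall>env. length env = length as \<longrightarrow> evalo orc p env (eval e env)" using Cp.IH(1)[of "length as"] Cp.prems by fastforce
  from Cp have "\<forall>a\<in>set as. \<exists>p. \<forall>env. length env = k \<longrightarrow> evalo orc p env (eval a env)"
    by (auto simp: list_all_iff)
  then obtain ps where ps: "\<forall>env. length env = k \<longrightarrow> list_all2 (\<lambda>g y. evalo orc g env y) ps (map (\<lambda>a. eval a env) as)"
    using choose_progs by blast
  show ?case
    by (rule exI[of _ "Comp p ps"]) (auto intro!: ev_comp ps[rule_format] p[rule_format])
next
  case (Rec n b s)
  then obtain pn pb ps where pn: "\<forall>env. length env = k \<longrightarrow> evalo orc pn env (eval n env)"
    and pb: "\<forall>env. length env = k \<longrightarrow> evalo orc pb env (eval b env)"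
    and ps: "\<forall>env. length env = Suc (Suc k) \<longrightarrow> evalo orc ps env (eval s env)" by fastforce
  show ?case
  proof (rule exI[of _ "Comp (Prim pb ps) (pn # map Proj [0..<k])"], intro allI impI)
    fix env :: "nat list" assume len: "length env = k"
    have "list_all2 (\<lambda>g y. evalo orc g env y) (pn # map Proj [0..<k]) (eval n env # env)"
      using pn len proj_list[of orc env] by auto
    moreover have "evalo orc (Prim pb ps) (eval n env # env) (eval (Rec n b s) env)"
      using prim_eval[of orc pb env "eval b env" ps "\<lambda>i acc. eval s (i # acc # env)"] pb ps len by auto
    ultimately show "evalo orc (Comp (Prim pb ps) (pn # map Proj [0..<k])) env (eval (Rec n b s) env)"
      by (rule ev_comp)
  qed
qed

primrec lift :: "nat \<Rightarrow> ex \<Rightarrow> ex" where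
  "lift c (V i) = (if i < c then V i else V (Suc i))"
| "lift c Z = Z"
| "lift c (S e) = S (lift c e)"
| "lift c (Fn F e) = Fn F (lift c e)"
| "lift c (Cp e as) = Cp e (map (lift c) as)"
| "lift c (Rec n b s) = Rec (lift c n) (lift c b) (lift (Suc (Suc c)) s)"

lemma eval_lift_gen:
  "c \<le> length env \<Longrightarrow> eval (lift c e) (take c env @ x # drop c env) = eval e env"
proof (induction e arbitrary: c env)
  case (V i) then show ?case by (auto simp: nth_append min_def)
next
  case (Cp e as) then show ?case by (auto intro!: arg_cong[where f="eval e"])
next
  case (Rec n b s)
  have "eval (lift (Suc (Suc c)) s) (i # acc # take c env @ x # drop c env) = eval s (i # acc # env)" for i acc
    using Rec.IH(3)[of "Suc (Suc c)" "i # acc # env"] Rec.prems by simp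
  then show ?case using Rec by simp
qed auto

lemma eval_lift0 [simp]: "eval (lift 0 e) (x # env) = eval e env"
  using eval_lift_gen[of 0 env e x] by simp

lemma eval_lift1 [simp]: "eval (lift (Suc 0) e) (i # x # env) = eval e (i # env)"
  using eval_lift_gen[of 1 "i # env" e x] by simp

lemma wfx_lift [simp]: "wfx k e \<Longrightarrow> c \<le> k \<Longrightarrow> wfx (Suc k) (lift c e)"
  by (induction e arbitrary: c k) (auto simp: list_all_iff)

lemma fok_lift [simp]: "fok orc (lift c e) = fok orc e"
  by (induction e arbitrary: c) (auto simp: list_all_iff)

definition cst :: "nat \<Rightarrow> ex" where "cst n = (S ^^ n) Z"
lemma eval_cst [simp]: "eval (cst n) env = n" by (induction n) (auto simp: cst_def)
lemma wfx_cst [simp]: "wfx k (cst n)" by (induction n) (auto simp: cst_def)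
lemma fok_cst [simp]: "fok orc (cst n)" by (induction n) (auto simp: cst_def)

definition "PRED = Rec (V 0) Z (V 0)"
definition "ADD = Rec (V 0) (V 1) (S (V 1))"
definition "SUB = Rec (V 1) (V 0) (Cp PRED [V 1])"
definition "MUL = Rec (V 0) Z (Cp ADD [V 1, V 3])"

lemma eval_PRED [simp]: "eval PRED [x] = x - 1"
  by (induction x) (auto simp: PRED_def)
lemma eval_ADD [simp]: "eval ADD [x, y] = x + y"
  by (induction x) (auto simp: ADD_def)
lemma eval_SUB [simp]: "eval SUB [x, y] = x - y"
  by (induction y) (auto simp: SUB_def)
lemma eval_MUL [simp]: "eval MUL [x, y] = x * y"
  by (induction x) (auto simp: MUL_def)
lemma wfx_ops [simp]: "wfx (Suc 0) PRED" "wfx (Suc (Suc 0)) ADD" "wfx (Suc (Suc 0)) SUB" "wfx (Suc (Suc 0)) MUL"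
  by (auto simp: PRED_def ADD_def SUB_def MUL_def)
lemma fok_ops [simp]: "fok orc PRED" "fok orc ADD" "fok orc SUB" "fok orc MUL"
  by (auto simp: PRED_def ADD_def SUB_def MUL_def)

definition "add a b = Cp ADD [a, b]"
definition "sub a b = Cp SUB [a, b]"
definition "mul a b = Cp MUL [a, b]"
definition "sg a = sub (cst 1) (sub (cst 1) a)"
definition "nt a = sub (cst 1) a"
definition "eqx a b = nt (add (sub a b) (sub b a))"
definition "ltx a b = sg (sub b a)"
definition "cnj a b = mul (sg a) (sg b)"
definition "dsj a b = sg (add a b)"
definition "ifx c a b = add (mul (sg c) a) (mul (nt c) b)"

lemma eval_derived [simp]:
  "eval (add a b) env = eval a env + eval b env"
  "eval (sub a b) env = eval a env - eval b env"
  "eval (mul a b) env = eval a env * eval b env"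
  "eval (sg a) env = (if eval a env = 0 then 0 else 1)"
  "eval (nt a) env = (if eval a env = 0 then 1 else 0)"
  "eval (eqx a b) env = (if eval a env = eval b env then 1 else 0)"
  "eval (ltx a b) env = (if eval a env < eval b env then 1 else 0)"
  "eval (cnj a b) env = (if eval a env \<noteq> 0 \<and> eval b env \<noteq> 0 then 1 else 0)"
  "eval (dsj a b) env = (if eval a env \<noteq> 0 \<or> eval b env \<noteq> 0 then 1 else 0)"
  "eval (ifx c a b) env = (if eval c env \<noteq> 0 then eval a env else eval b env)"
  by (auto simp: add_def sub_def mul_def sg_def nt_def eqx_def ltx_def cnj_def dsj_def ifx_def)

lemma wfx_derived [simp]:
  "wfx k (add a b) = (wfx k a \<and> wfx k b)"
  "wfx k (sub a b) = (wfx k a \<and> wfx k b)"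
  "wfx k (mul a b) = (wfx k a \<and> wfx k b)"
  "wfx k (sg a) = wfx k a"
  "wfx k (nt a) = wfx k a"
  "wfx k (eqx a b) = (wfx k a \<and> wfx k b)"
  "wfx k (ltx a b) = (wfx k a \<and> wfx k b)"
  "wfx k (cnj a b) = (wfx k a \<and> wfx k b)"
  "wfx k (dsj a b) = (wfx k a \<and> wfx k b)"
  "wfx k (ifx c a b) = (wfx k c \<and> wfx k a \<and> wfx k b)"
  by (auto simp: add_def sub_def mul_def sg_def nt_def eqx_def ltx_def cnj_def dsj_def ifx_def)

lemma fok_derived [simp]:
  "fok orc (add a b) = (fok orc a \<and> fok orc b)"
  "fok orc (sub a b) = (fok orc a \<and> fok orc b)"
  "fok orc (mul a b) = (fok orc a \<and> fok orc b)"
  "fok orc (sg a) = fok orc a"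
  "fok orc (nt a) = fok orc a"
  "fok orc (eqx a b) = (fok orc a \<and> fok orc b)"
  "fok orc (ltx a b) = (fok orc a \<and> fok orc b)"
  "fok orc (cnj a b) = (fok orc a \<and> fok orc b)"
  "fok orc (dsj a b) = (fok orc a \<and> fok orc b)"
  "fok orc (ifx c a b) = (fok orc c \<and> fok orc a \<and> fok orc b)"
  by (auto simp: add_def sub_def mul_def sg_def nt_def eqx_def ltx_def cnj_def dsj_def ifx_def)

text \<open>Bounded quantifiers; the body is evaluated in environment (i # env).\<close>
definition "bex n body = Rec n Z (dsj (V 1) (lift (Suc 0) body))"
definition "ball n body = nt (bex n (nt body))"
definition "bmin n body = Rec n Z (ifx (ltx (V 1) (V 0)) (V 1) (ifx (lift (Suc 0) body) (V 0) (S (V 0))))"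

lemma rec_bex: "rec_nat 0 (\<lambda>i acc. if acc \<noteq> 0 \<or> P i then 1 else 0) m = (if \<exists>i<m. P i then 1 else 0)"
  by (induction m) (auto simp: less_Suc_eq)

lemma eval_bex [simp]:
  "eval (bex n body) env = (if \<exists>i<eval n env. eval body (i # env) \<noteq> 0 then 1 else 0)"
proof -
  have st: "(\<lambda>i acc. eval (dsj (V 1) (lift (Suc 0) body)) (i # acc # env))
     = (\<lambda>i acc. if acc \<noteq> 0 \<or> eval body (i # env) \<noteq> 0 then 1 else 0)"
    by (intro ext) simp
  show ?thesis unfolding bex_def eval.simps(6) eval.simps(2) st by (rule rec_bex)
qed

lemma eval_ball [simp]:
  "eval (ball n body) env = (if \<forall>i<eval n env. eval body (i # env) \<noteq> 0 then 1 else 0)"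
  by (auto simp: ball_def)

lemma rec_bmin: "rec_nat 0 (\<lambda>i acc. if acc < i then acc else if P i then i else Suc i) m
   = (if \<exists>i<m. P i then (LEAST i. P i) else m)"
proof (induction m)
  case 0 then show ?case by simp
next
  case (Suc m)
  show ?case
  proof (cases "\<exists>i<m. P i")
    case True
    then have "(LEAST i. P i) < m" by (meson LeastI_ex Least_le order_le_less_trans)
    with True Suc.IH show ?thesis by (auto simp: less_Suc_eq)
  next
    case False
    then have nm: "\<And>i. i < m \<Longrightarrow> \<not> P i" by auto
    show ?thesis
    proof (cases "P m")
      case True
      then have "(LEAST i. P i) = m"
        by (metis (mono_tags, lifting) Least_equality nm not_le_imp_less)
      with True False Suc.IH show ?thesis by auto
    next
      case F2: False
      with False Suc.IH show ?thesis by (auto simp: less_Suc_eq)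
    qed
  qed
qed

lemma eval_bmin [simp]:
  "eval (bmin n body) env = (if \<exists>i<eval n env. eval body (i # env) \<noteq> 0
     then (LEAST i. eval body (i # env) \<noteq> 0) else eval n env)"
proof -
  have st: "(\<lambda>i acc. eval (ifx (ltx (V 1) (V 0)) (V 1) (ifx (lift (Suc 0) body) (V 0) (S (V 0)))) (i # acc # env))
     = (\<lambda>i acc. if acc < i then acc else if eval body (i # env) \<noteq> 0 then i else Suc i)"
    by (intro ext) simp
  show ?thesis unfolding bmin_def eval.simps(6) eval.simps(2) st by (rule rec_bmin)
qed

lemma wfx_bq [simp]:
  "wfx k n \<Longrightarrow> wfx (Suc k) b \<Longrightarrow> wfx k (bex n b)"
  "wfx k n \<Longrightarrow> wfx (Suc k) b \<Longrightarrow> wfx k (ball n b)"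
  "wfx k n \<Longrightarrow> wfx (Suc k) b \<Longrightarrow> wfx k (bmin n b)"
  by (auto simp: bex_def ball_def bmin_def)

lemma fok_bq [simp]:
  "fok orc (bex n b) = (fok orc n \<and> fok orc b)"
  "fok orc (ball n b) = (fok orc n \<and> fok orc b)"
  "fok orc (bmin n b) = (fok orc n \<and> fok orc b)"
  by (auto simp: bex_def ball_def bmin_def)

lemma fok_ifx_simp: "True" by simp

definition pf :: "nat \<Rightarrow> nat" where "pf n = fst (prod_decode n)"
definition ps :: "nat \<Rightarrow> nat" where "ps n = snd (prod_decode n)"
definition hdc :: "nat \<Rightarrow> nat" where "hdc L = pf (L - 1)"
definition tlc :: "nat \<Rightarrow> nat" where "tlc L = ps (L - 1)"
definition consc :: "nat \<Rightarrow> nat \<Rightarrow> nat" where "consc x L = Suc (prod_encode (x, L))"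
definition nthc :: "nat \<Rightarrow> nat \<Rightarrow> nat" where "nthc i L = hdc ((tlc ^^ i) L)"
definition lenc :: "nat \<Rightarrow> nat" where "lenc L = length (list_decode L)"

lemma pf_enc [simp]: "pf (prod_encode (a, b)) = a" by (simp add: pf_def)
lemma ps_enc [simp]: "ps (prod_encode (a, b)) = b" by (simp add: ps_def)
lemma pf_ps: "prod_encode (pf n, ps n) = n" by (simp add: pf_def ps_def)
lemma pf_le: "pf n \<le> n" by (metis le_prod_encode_1 pf_ps)
lemma ps_le: "ps n \<le> n" by (metis le_prod_encode_2 pf_ps)

lemma consc_list [simp]: "consc x (list_encode xs) = list_encode (x # xs)" by (simp add: consc_def)
lemma hdc_cons [simp]: "hdc (list_encode (x # xs)) = x" by (simp add: hdc_def)
lemma tlc_cons [simp]: "tlc (list_encode (x # xs)) = list_encode xs" by (simp add: tlc_def)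
lemma tlc_nil: "tlc (list_encode []) = list_encode []"
  by (simp add: tlc_def ps_def prod_decode_def prod_decode_aux.simps)
lemma tlc_list: "tlc (list_encode xs) = list_encode (tl xs)"
  using tlc_nil by (cases xs) (auto simp: tlc_def)
lemma tln_list: "(tlc ^^ i) (list_encode xs) = list_encode (drop i xs)"
proof (induction i arbitrary: xs)
  case 0 then show ?case by simp
next
  case (Suc i)
  have "(tlc ^^ Suc i) (list_encode xs) = (tlc ^^ i) (tlc (list_encode xs))"
    by (simp only: funpow_Suc_right o_apply)
  also have "\<dots> = list_encode (drop i (tl xs))" by (simp only: tlc_list Suc.IH)
  finally show ?case by (simp add: drop_Suc)
qed
lemma nthc_list [simp]: "i < length xs \<Longrightarrow> nthc i (list_encode xs) = xs ! i"
proof -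
  assume "i < length xs"
  then have "drop i xs = xs ! i # drop (Suc i) xs" by (rule Cons_nth_drop_Suc[symmetric])
  then show ?thesis by (simp add: nthc_def tln_list hdc_def)
qed
lemma lenc_list [simp]: "lenc (list_encode xs) = length xs" by (simp add: lenc_def)
lemma length_le_list_encode: "length xs \<le> list_encode xs"
  by (induction xs) (auto intro: le_trans[OF _ le_prod_encode_2])
lemma list_encode_0 [simp]: "list_encode xs = 0 \<longleftrightarrow> xs = []"
  by (cases xs) auto

definition "TRI = Rec (V 0) Z (add (V 1) (S (V 0)))"
definition "PENC = add (Cp TRI [add (V 0) (V 1)]) (V 0)"
definition "PF = bmin (S (V 0)) (bex (S (V 1)) (eqx (Cp PENC [V 1, V 0]) (V 2)))"
definition "PS = bmin (S (V 0)) (bex (S (V 1)) (eqx (Cp PENC [V 0, V 1]) (V 2)))"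

lemma eval_TRI [simp]: "eval TRI [n] = triangle n"
  by (induction n) (auto simp: TRI_def)
lemma eval_PENC [simp]: "eval PENC [a, b] = prod_encode (a, b)"
  by (simp add: PENC_def prod_encode_def)

lemma eval_bmin_P:
  "eval n env = N \<Longrightarrow> (\<And>i. eval body (i # env) \<noteq> 0 \<longleftrightarrow> P i) \<Longrightarrow>
   eval (bmin n body) env = (if \<exists>i<N. P i then (LEAST i. P i) else N)"
  by auto

lemma eval_bex_P:
  "eval n env = N \<Longrightarrow> (\<And>i. eval body (i # env) \<noteq> 0 \<longleftrightarrow> P i) \<Longrightarrow>
   eval (bex n body) env \<noteq> 0 \<longleftrightarrow> (\<exists>i<N. P i)"
  by auto

lemma eval_PF [simp]: "eval PF [n] = pf n"
proof -
  have ex: "\<exists>a<Suc n. \<exists>b<Suc n. prod_encode (a, b) = n"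
    using pf_le ps_le pf_ps by (metis le_imp_less_Suc)
  have "(LEAST a. \<exists>b<Suc n. prod_encode (a, b) = n) = pf n"
  proof (rule Least_equality)
    show "\<exists>b<Suc n. prod_encode (pf n, b) = n" using ps_le pf_ps by (metis le_imp_less_Suc)
  next
    fix a assume "\<exists>b<Suc n. prod_encode (a, b) = n"
    then obtain b where "prod_encode (a, b) = n" by auto
    then show "pf n \<le> a" by (metis pf_enc order_refl)
  qed
  moreover have "eval PF [n] = (if \<exists>a<Suc n. \<exists>b<Suc n. prod_encode (a, b) = n then (LEAST a. \<exists>b<Suc n. prod_encode (a, b) = n) else Suc n)"
    unfolding PF_def by (rule eval_bmin_P, simp, rule eval_bex_P) simp_all
  ultimately show ?thesis using ex by presburger
qed

lemma eval_PS [simp]: "eval PS [n] = ps n"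
proof -
  have ex: "\<exists>b<Suc n. \<exists>a<Suc n. prod_encode (a, b) = n"
    using pf_le ps_le pf_ps by (metis le_imp_less_Suc)
  have "(LEAST b. \<exists>a<Suc n. prod_encode (a, b) = n) = ps n"
  proof (rule Least_equality)
    show "\<exists>a<Suc n. prod_encode (a, ps n) = n" using pf_le pf_ps by (metis le_imp_less_Suc)
  next
    fix b assume "\<exists>a<Suc n. prod_encode (a, b) = n"
    then obtain a where "prod_encode (a, b) = n" by auto
    then show "ps n \<le> b" by (metis ps_enc order_refl)
  qed
  moreover have "eval PS [n] = (if \<exists>b<Suc n. \<exists>a<Suc n. prod_encode (a, b) = n then (LEAST b. \<exists>a<Suc n. prod_encode (a, b) = n) else Suc n)"
    unfolding PS_def by (rule eval_bmin_P, simp, rule eval_bex_P) simp_all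
  ultimately show ?thesis using ex by presburger
qed

lemma wfx_codes [simp]: "wfx (Suc 0) TRI" "wfx (Suc (Suc 0)) PENC" "wfx (Suc 0) PF" "wfx (Suc 0) PS"
  by (auto simp: TRI_def PENC_def PF_def PS_def)
lemma fok_codes [simp]: "fok orc TRI" "fok orc PENC" "fok orc PF" "fok orc PS"
  by (auto simp: TRI_def PENC_def PF_def PS_def)

definition "penc a b = Cp PENC [a, b]"
definition "pfx a = Cp PF [a]"
definition "psx a = Cp PS [a]"
definition "hdx L = pfx (sub L (cst 1))"
definition "tlx L = psx (sub L (cst 1))"
definition "consx x L = S (penc x L)"
definition "TLN = Rec (V 0) (V 1) (tlx (V 1))"
definition "tlnx i L = Cp TLN [i, L]"
definition "nthx i L = hdx (tlnx i L)"
definition "LEN = bmin (S (V 0)) (eqx (tlnx (V 0) (V 1)) Z)"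
definition "lenx L = Cp LEN [L]"

lemma eval_TLN: "eval TLN [i, L] = (tlc ^^ i) L"
  by (induction i) (auto simp: TLN_def tlx_def psx_def tlc_def)

lemma eval_LEN: "eval LEN [L] = lenc L"
proof -
  obtain xs where L: "L = list_encode xs" by (metis list_decode_inverse)
  have "\<exists>i<Suc L. (tlc ^^ i) L = 0" using L length_le_list_encode[of xs]
    by (intro exI[of _ "length xs"]) (auto simp: tln_list)
  moreover have "(LEAST i. (tlc ^^ i) L = 0) = length xs"
    by (rule Least_equality) (auto simp: L tln_list)
  moreover have "eval LEN [L] = (if \<exists>i<Suc L. (tlc ^^ i) L = 0 then (LEAST i. (tlc ^^ i) L = 0) else Suc L)"
    unfolding LEN_def tlnx_def by (rule eval_bmin_P) (simp_all add: eval_TLN)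
  ultimately show ?thesis by (simp add: lenc_def L)
qed

lemma eval_codes [simp]:
  "eval (penc a b) env = prod_encode (eval a env, eval b env)"
  "eval (pfx a) env = pf (eval a env)"
  "eval (psx a) env = ps (eval a env)"
  "eval (hdx a) env = hdc (eval a env)"
  "eval (tlx a) env = tlc (eval a env)"
  "eval (consx a b) env = consc (eval a env) (eval b env)"
  "eval (nthx a b) env = nthc (eval a env) (eval b env)"
  "eval (lenx a) env = lenc (eval a env)"
  by (auto simp: penc_def pfx_def psx_def hdx_def tlx_def consx_def nthx_def lenx_def
      hdc_def tlc_def consc_def nthc_def tlnx_def eval_TLN eval_LEN)

lemma wfx_TLN [simp]: "wfx (Suc (Suc 0)) TLN" "wfx (Suc 0) LEN"
  by (auto simp: TLN_def tlx_def psx_def LEN_def tlnx_def)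
lemma fok_TLN [simp]: "fok orc TLN" "fok orc LEN"
  by (auto simp: TLN_def tlx_def psx_def LEN_def tlnx_def)

lemma wfx_codeops [simp]:
  "wfx k (penc a b) = (wfx k a \<and> wfx k b)"
  "wfx k (pfx a) = wfx k a"
  "wfx k (psx a) = wfx k a"
  "wfx k (hdx a) = wfx k a"
  "wfx k (tlx a) = wfx k a"
  "wfx k (consx a b) = (wfx k a \<and> wfx k b)"
  "wfx k (nthx a b) = (wfx k a \<and> wfx k b)"
  "wfx k (lenx a) = wfx k a"
  by (auto simp: penc_def pfx_def psx_def hdx_def tlx_def consx_def nthx_def lenx_def tlnx_def)

lemma fok_codeops [simp]:
  "fok orc (penc a b) = (fok orc a \<and> fok orc b)"
  "fok orc (pfx a) = fok orc a"
  "fok orc (psx a) = fok orc a"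
  "fok orc (hdx a) = fok orc a"
  "fok orc (tlx a) = fok orc a"
  "fok orc (consx a b) = (fok orc a \<and> fok orc b)"
  "fok orc (nthx a b) = (fok orc a \<and> fok orc b)"
  "fok orc (lenx a) = fok orc a"
  by (auto simp: penc_def pfx_def psx_def hdx_def tlx_def consx_def nthx_def lenx_def tlnx_def)

definition ent0 :: "nat \<Rightarrow> nat \<Rightarrow> nat \<Rightarrow> nat" where
  "ent0 c a z = prod_encode (0, prod_encode (c, prod_encode (a, z)))"
definition ent1 :: "nat \<Rightarrow> nat" where "ent1 c = prod_encode (1, c)"
definition jc :: "nat \<Rightarrow> nat" where "jc y = pf (ps y)"
definition ja :: "nat \<Rightarrow> nat" where "ja y = pf (ps (ps y))"
definition jz :: "nat \<Rightarrow> nat" where "jz y = ps (ps (ps y))"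

lemma ent_simps [simp]:
  "pf (ent0 c a z) = 0" "jc (ent0 c a z) = c" "ja (ent0 c a z) = a" "jz (ent0 c a z) = z"
  "pf (ent1 c) = 1" "ps (ent1 c) = c"
  "ent0 c a z = ent0 c' a' z' \<longleftrightarrow> c = c' \<and> a = a' \<and> z = z'"
  "ent1 c = ent1 c' \<longleftrightarrow> c = c'" "ent0 c a z \<noteq> ent1 c'" "ent1 c' \<noteq> ent0 c a z"
  by (auto simp: ent0_def ent1_def jc_def ja_def jz_def)

lemma ent0_eq: "pf y = 0 \<Longrightarrow> ent0 (jc y) (ja y) (jz y) = y"
  by (simp add: ent0_def jc_def ja_def jz_def pf_ps) (metis pf_ps)

definition cert :: "nat set \<Rightarrow> nat \<Rightarrow> bool" where
  "cert M c \<longleftrightarrow> c = prod_encode (0, 0) \<or> c = prod_encode (1, 0) \<or> c = prod_encode (3, 0) \<or> pf c = 2 \<or>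
    (pf c = 4 \<and> ent1 (pf (ps c)) \<in> M \<and> (\<forall>i<lenc (ps (ps c)). ent1 (nthc i (ps (ps c))) \<in> M)) \<or>
    (pf c = 5 \<and> ent1 (pf (ps c)) \<in> M \<and> ent1 (ps (ps c)) \<in> M) \<or>
    (pf c = 6 \<and> ent1 (ps c) \<in> M)"

definition evj :: "(nat \<Rightarrow> nat \<Rightarrow> bool) \<Rightarrow> nat set \<Rightarrow> nat \<Rightarrow> nat \<Rightarrow> nat \<Rightarrow> bool" where
  "evj Q M c a z \<longleftrightarrow> ent1 c \<in> M \<and> (
    (c = prod_encode (0, 0) \<and> z = 0) \<or>
    (c = prod_encode (1, 0) \<and> a \<noteq> 0 \<and> z = Suc (hdc a)) \<or>
    (pf c = 2 \<and> ps c < lenc a \<and> z = nthc (ps c) a) \<or>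
    (c = prod_encode (3, 0) \<and> a \<noteq> 0 \<and> Q (hdc a) z) \<or>
    (pf c = 4 \<and> (\<exists>y\<in>M. pf y = 0 \<and> jc y = pf (ps c) \<and> jz y = z \<and> lenc (ja y) = lenc (ps (ps c)) \<and>
        (\<forall>i<lenc (ps (ps c)). ent0 (nthc i (ps (ps c))) a (nthc i (ja y)) \<in> M))) \<or>
    (pf c = 5 \<and> a \<noteq> 0 \<and> ((hdc a = 0 \<and> ent0 (pf (ps c)) (tlc a) z \<in> M) \<or>
        (hdc a \<noteq> 0 \<and> (\<exists>y\<in>M. pf y = 0 \<and> jc y = c \<and> ja y = consc (hdc a - 1) (tlc a) \<and>
             ent0 (ps (ps c)) (consc (hdc a - 1) (consc (jz y) (tlc a))) z \<in> M)))) \<or>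
    (pf c = 6 \<and> ent0 (ps c) (consc z a) 0 \<in> M \<and>
        (\<forall>m<z. \<exists>y\<in>M. pf y = 0 \<and> jc y = ps c \<and> ja y = consc m a \<and> jz y \<noteq> 0)))"

definition just :: "(nat \<Rightarrow> nat \<Rightarrow> bool) \<Rightarrow> nat set \<Rightarrow> nat \<Rightarrow> bool" where
  "just Q M y \<longleftrightarrow> (pf y = 1 \<and> cert M (ps y)) \<or> (pf y = 0 \<and> evj Q M (jc y) (ja y) (jz y))"

definition valid :: "(nat \<Rightarrow> nat \<Rightarrow> bool) \<Rightarrow> nat list \<Rightarrow> bool" where
  "valid Q Ds \<longleftrightarrow> (\<forall>j<length Ds. just Q (set (take j Ds)) (Ds ! j))"

definition good :: "(nat \<Rightarrow> nat) \<Rightarrow> nat \<Rightarrow> bool" where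
  "good orc y \<longleftrightarrow> (pf y = 1 \<longrightarrow> (\<exists>p. enc p = ps y)) \<and>
     (pf y = 0 \<longrightarrow> (\<exists>p. enc p = jc y) \<and> (\<forall>p. enc p = jc y \<longrightarrow> evalo orc p (list_decode (ja y)) (jz y)))"

lemma enc_pf: "pf (enc p) = (case p of Zero \<Rightarrow> 0 | Succ \<Rightarrow> 1 | Proj _ \<Rightarrow> 2 | Oracle \<Rightarrow> 3
   | Comp _ _ \<Rightarrow> 4 | Prim _ _ \<Rightarrow> 5 | Mu _ \<Rightarrow> 6)"
  by (cases p) auto

lemma enc_Comp_inv: "enc p = c \<Longrightarrow> pf c = 4 \<Longrightarrow>
   \<exists>f gs. p = Comp f gs \<and> enc f = pf (ps c) \<and> ps (ps c) = list_encode (map enc gs)"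
  by (cases p) auto
lemma enc_Prim_inv: "enc p = c \<Longrightarrow> pf c = 5 \<Longrightarrow>
   \<exists>f g. p = Prim f g \<and> enc f = pf (ps c) \<and> enc g = ps (ps c)"
  by (cases p) auto
lemma enc_Mu_inv: "enc p = c \<Longrightarrow> pf c = 6 \<Longrightarrow> \<exists>f. p = Mu f \<and> enc f = ps c"
  by (cases p) auto
lemma enc_Proj_inv: "enc p = c \<Longrightarrow> pf c = 2 \<Longrightarrow> p = Proj (ps c)"
  by (cases p) auto
lemma enc_Zero_inv: "enc p = prod_encode (0, 0) \<Longrightarrow> p = Zero"
  by (cases p) auto
lemma enc_Succ_inv: "enc p = prod_encode (1, 0) \<Longrightarrow> p = Succ"
  by (cases p) auto
lemma enc_Oracle_inv: "enc p = prod_encode (3, 0) \<Longrightarrow> p = Oracle"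
  by (cases p) auto

lemma list_decode_nonempty: "a \<noteq> 0 \<Longrightarrow> list_decode a = hdc a # list_decode (tlc a)"
  by (metis hdc_cons list.exhaust list_decode_inverse list_encode_0 tlc_cons list_encode_inverse)

lemma map_nthc: "map (\<lambda>i. nthc i G) [0..<lenc G] = list_decode G"
proof -
  obtain gs where G: "G = list_encode gs" by (metis list_decode_inverse)
  show ?thesis by (simp add: G) (rule nth_equalityI, auto)
qed

lemma pair_split: "c = prod_encode (pf c, prod_encode (pf (ps c), ps (ps c)))"
  by (simp add: pf_ps)

lemma good_ent1: "good orc (ent1 c) \<Longrightarrow> \<exists>p. enc p = c"
  by (simp add: good_def)
lemma good_ent0: "good orc (ent0 c a z) \<Longrightarrow> enc p = c \<Longrightarrow> evalo orc p (list_decode a) z"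
  by (simp add: good_def)

lemma cert_good:
  assumes M: "\<forall>y\<in>M. good orc y" and c: "cert M c"
  shows "\<exists>p. enc p = c"
proof -
  have g1: "ent1 d \<in> M \<Longrightarrow> \<exists>p. enc p = d" for d using M good_ent1 by blast
  from c show ?thesis unfolding cert_def
  proof (elim disjE conjE)
    assume "c = prod_encode (0, 0)" then show ?thesis by (intro exI[of _ Zero]) simp
  next
    assume "c = prod_encode (1, 0)" then show ?thesis by (intro exI[of _ Succ]) simp
  next
    assume "c = prod_encode (3, 0)" then show ?thesis by (intro exI[of _ Oracle]) simp
  next
    assume "pf c = 2" then show ?thesis by (intro exI[of _ "Proj (ps c)"]) (simp, metis pf_ps)
  next
    assume t: "pf c = 4" and f: "ent1 (pf (ps c)) \<in> M"
      and gs: "\<forall>i<lenc (ps (ps c)). ent1 (nthc i (ps (ps c))) \<in> M"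
    let ?G = "ps (ps c)"
    obtain pf0 where pf0: "enc pf0 = pf (ps c)" using g1 f by blast
    define pgs where "pgs = map (\<lambda>i. SOME p. enc p = nthc i ?G) [0..<lenc ?G]"
    have "map enc pgs = map (\<lambda>i. nthc i ?G) [0..<lenc ?G]"
      unfolding pgs_def using gs g1 by (auto intro: someI_ex)
    then have "map enc pgs = list_decode ?G" by (simp add: map_nthc)
    then have "enc (Comp pf0 pgs) = c" using t pf0 pair_split[of c] by simp
    then show ?thesis by blast
  next
    assume t: "pf c = 5" and f: "ent1 (pf (ps c)) \<in> M" and g: "ent1 (ps (ps c)) \<in> M"
    obtain pf0 where pf0: "enc pf0 = pf (ps c)" using g1 f by blast
    obtain pg0 where pg0: "enc pg0 = ps (ps c)" using g1 g by blast
    have "enc (Prim pf0 pg0) = c" using t pf0 pg0 pair_split[of c] by simp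
    then show ?thesis by blast
  next
    assume t: "pf c = 6" and f: "ent1 (ps c) \<in> M"
    obtain pf0 where pf0: "enc pf0 = ps c" using g1 f by blast
    have "enc (Mu pf0) = c" using t pf0 by (simp, metis pf_ps)
    then show ?thesis by blast
  qed
qed

lemma evj_good:
  assumes M: "\<forall>y\<in>M. good orc y" and Qs: "\<forall>x z. Q x z \<longrightarrow> z = orc x"
    and e: "evj Q M c a z" and p: "enc p = c"
  shows "evalo orc p (list_decode a) z"
proof -
  have g0: "ent0 d b v \<in> M \<Longrightarrow> enc q = d \<Longrightarrow> evalo orc q (list_decode b) v" for d b v q
    using M good_ent0 by blast
  have gy: "y \<in> M \<Longrightarrow> pf y = 0 \<Longrightarrow> enc q = jc y \<Longrightarrow> evalo orc q (list_decode (ja y)) (jz y)" for y q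
    using M by (auto simp: good_def)
  from e have "(c = prod_encode (0, 0) \<and> z = 0) \<or>
    (c = prod_encode (1, 0) \<and> a \<noteq> 0 \<and> z = Suc (hdc a)) \<or>
    (pf c = 2 \<and> ps c < lenc a \<and> z = nthc (ps c) a) \<or>
    (c = prod_encode (3, 0) \<and> a \<noteq> 0 \<and> Q (hdc a) z) \<or>
    (pf c = 4 \<and> (\<exists>y\<in>M. pf y = 0 \<and> jc y = pf (ps c) \<and> jz y = z \<and> lenc (ja y) = lenc (ps (ps c)) \<and>
        (\<forall>i<lenc (ps (ps c)). ent0 (nthc i (ps (ps c))) a (nthc i (ja y)) \<in> M))) \<or>
    (pf c = 5 \<and> a \<noteq> 0 \<and> ((hdc a = 0 \<and> ent0 (pf (ps c)) (tlc a) z \<in> M) \<or>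
        (hdc a \<noteq> 0 \<and> (\<exists>y\<in>M. pf y = 0 \<and> jc y = c \<and> ja y = consc (hdc a - 1) (tlc a) \<and>
             ent0 (ps (ps c)) (consc (hdc a - 1) (consc (jz y) (tlc a))) z \<in> M)))) \<or>
    (pf c = 6 \<and> ent0 (ps c) (consc z a) 0 \<in> M \<and>
        (\<forall>m<z. \<exists>y\<in>M. pf y = 0 \<and> jc y = ps c \<and> ja y = consc m a \<and> jz y \<noteq> 0))"
    unfolding evj_def by blast
  then show ?thesis
  proof (elim disjE conjE)
    assume "c = prod_encode (0, 0)" "z = 0"
    then show ?thesis using p enc_Zero_inv by (auto intro: ev_zero)
  next
    assume "c = prod_encode (1, 0)" "a \<noteq> 0" "z = Suc (hdc a)"
    then show ?thesis using p enc_Succ_inv list_decode_nonempty[of a] by (auto intro: ev_succ)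
  next
    assume "pf c = 2" "ps c < lenc a" "z = nthc (ps c) a"
    moreover obtain xs where "a = list_encode xs" by (metis list_decode_inverse)
    moreover have "p = Proj (ps c)" using enc_Proj_inv[OF p] \<open>pf c = 2\<close> by blast
    ultimately show ?thesis by (auto intro: ev_proj)
  next
    assume "c = prod_encode (3, 0)" "a \<noteq> 0" "Q (hdc a) z"
    then show ?thesis using p enc_Oracle_inv list_decode_nonempty[of a] Qs by (auto intro: ev_oracle)
  next
    assume t: "pf c = 4"
    obtain f gs where pp: "p = Comp f gs" and f: "enc f = pf (ps c)" and G: "ps (ps c) = list_encode (map enc gs)"
      using enc_Comp_inv[OF p t] by blast
    assume "\<exists>y\<in>M. pf y = 0 \<and> jc y = pf (ps c) \<and> jz y = z \<and> lenc (ja y) = lenc (ps (ps c)) \<and>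
        (\<forall>i<lenc (ps (ps c)). ent0 (nthc i (ps (ps c))) a (nthc i (ja y)) \<in> M)"
    then obtain y where y: "y \<in> M" "pf y = 0" "jc y = pf (ps c)" "jz y = z" "lenc (ja y) = length gs"
      and ys: "\<forall>i<length gs. ent0 (enc (gs ! i)) a (nthc i (ja y)) \<in> M"
      using G by auto
    obtain ys where Y: "ja y = list_encode ys" by (metis list_decode_inverse)
    have "list_all2 (\<lambda>g v. evalo orc g (list_decode a) v) gs ys"
      using ys y(5) Y g0 by (auto simp: list_all2_conv_all_nth)
    moreover have "evalo orc f ys z" using gy[OF y(1) y(2)] f y(3) y(4) Y by auto
    ultimately show ?thesis unfolding pp by (rule ev_comp)
  next
    assume t: "pf c = 5" and a: "a \<noteq> 0"
    obtain f g where pp: "p = Prim f g" and f: "enc f = pf (ps c)" and g: "enc g = ps (ps c)"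
      using enc_Prim_inv[OF p t] by blast
    have la: "list_decode a = hdc a # list_decode (tlc a)" using list_decode_nonempty[OF a] .
    {
      assume "hdc a = 0" "ent0 (pf (ps c)) (tlc a) z \<in> M"
      then show ?thesis using la g0 f unfolding pp by (auto intro: ev_prim0)
    }
    {
      assume h: "hdc a \<noteq> 0" and "\<exists>y\<in>M. pf y = 0 \<and> jc y = c \<and> ja y = consc (hdc a - 1) (tlc a) \<and>
             ent0 (ps (ps c)) (consc (hdc a - 1) (consc (jz y) (tlc a))) z \<in> M"
      then obtain y where y: "y \<in> M" "pf y = 0" "jc y = c" "ja y = consc (hdc a - 1) (tlc a)"
        and yy: "ent0 (ps (ps c)) (consc (hdc a - 1) (consc (jz y) (tlc a))) z \<in> M" by blast
      obtain xs where X: "tlc a = list_encode xs" by (metis list_decode_inverse)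
      have e1: "evalo orc p ((hdc a - 1) # xs) (jz y)" using gy[OF y(1) y(2)] p y(3) y(4) X by auto
      have "consc (hdc a - 1) (consc (jz y) (tlc a)) = list_encode ((hdc a - 1) # jz y # xs)"
        using X by (simp only: consc_list)
      then have e2: "evalo orc g ((hdc a - 1) # jz y # xs) z" using g0[OF yy g] by simp
      have "Suc (hdc a - 1) = hdc a" using h by simp
      then show ?thesis using e1 e2 la X unfolding pp by (metis ev_primS list_encode_inverse)
    }
  next
    assume t: "pf c = 6" and z0: "ent0 (ps c) (consc z a) 0 \<in> M"
      and ms: "\<forall>m<z. \<exists>y\<in>M. pf y = 0 \<and> jc y = ps c \<and> ja y = consc m a \<and> jz y \<noteq> 0"
    obtain f where pp: "p = Mu f" and f: "enc f = ps c" using enc_Mu_inv[OF p t] by blast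
    obtain xs where X: "a = list_encode xs" by (metis list_decode_inverse)
    have "evalo orc f (z # xs) 0" using g0[OF z0 f] X by simp
    moreover have "\<forall>m<z. \<exists>v. evalo orc f (m # xs) (Suc v)"
    proof (intro allI impI)
      fix m assume "m < z"
      then obtain y where y: "y \<in> M" "pf y = 0" "jc y = ps c" "ja y = consc m a" "jz y \<noteq> 0" using ms by blast
      have "evalo orc f (m # xs) (jz y)" using gy[OF y(1) y(2)] f y(3) y(4) X by auto
      then show "\<exists>v. evalo orc f (m # xs) (Suc v)" using y(5) by (metis Suc_pred neq0_conv)
    qed
    ultimately show ?thesis unfolding pp X by (simp add: ev_mu)
  qed
qed

lemma just_good:
  assumes M: "\<forall>y\<in>M. good orc y" and Qs: "\<forall>x z. Q x z \<longrightarrow> z = orc x" and j: "just Q M y"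
  shows "good orc y"
proof -
  from j consider "pf y = 1" "cert M (ps y)" | "pf y = 0" "evj Q M (jc y) (ja y) (jz y)"
    unfolding just_def by metis
  then show ?thesis
  proof cases
    case 1 then show ?thesis using cert_good[OF M] by (simp add: good_def)
  next
    case 2
    then have "ent1 (jc y) \<in> M" by (simp add: evj_def)
    then have "\<exists>p. enc p = jc y" using M good_ent1 by blast
    then show ?thesis using 2 evj_good[OF M Qs] by (simp add: good_def)
  qed
qed

lemma valid_good:
  assumes v: "valid Q Ds" and Qs: "\<forall>x z. Q x z \<longrightarrow> z = orc x"
  shows "\<forall>y\<in>set Ds. good orc y"
proof -
  have "\<forall>y\<in>set (take j Ds). good orc y" for j
  proof (induction j)
    case 0 then show ?case by simp
  next
    case (Suc j)
    show ?case
    proof (cases "j < length Ds")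
      case True
      then have "take (Suc j) Ds = take j Ds @ [Ds ! j]" by (simp add: take_Suc_conv_app_nth)
      moreover have "good orc (Ds ! j)"
        using just_good[OF Suc.IH Qs] v True by (simp add: valid_def)
      ultimately show ?thesis using Suc.IH by simp
    next
      case False then show ?thesis using Suc.IH by simp
    qed
  qed
  from this[of "length Ds"] show ?thesis by simp
qed

lemma cert_mono: assumes "M \<subseteq> M'" "cert M c" shows "cert M' c"
proof -
  have m: "x \<in> M \<Longrightarrow> x \<in> M'" for x using assms(1) by blast
  show ?thesis using assms(2) unfolding cert_def
    by (elim disjE conjE) (simp_all add: m)
qed

lemma evj_mono: assumes "M \<subseteq> M'" "evj Q M c a z" shows "evj Q M' c a z"
proof -
  have m: "x \<in> M \<Longrightarrow> x \<in> M'" for x using assms(1) by blast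
  show ?thesis using assms(2) unfolding evj_def
    apply (elim disjE conjE)
    apply (simp_all add: m)
    apply (rule disjI2, rule disjI2, rule disjI2, blast intro: m)+
    done
qed

lemma just_mono: "M \<subseteq> M' \<Longrightarrow> just Q M y \<Longrightarrow> just Q M' y"
  unfolding just_def by (metis cert_mono evj_mono)

lemma valid_Nil [simp]: "valid Q []" by (simp add: valid_def)

lemma valid_append: "valid Q A \<Longrightarrow> valid Q B \<Longrightarrow> valid Q (A @ B)"
  unfolding valid_def
proof (intro allI impI)
  fix j assume vA: "\<forall>j<length A. just Q (set (take j A)) (A ! j)"
    and vB: "\<forall>j<length B. just Q (set (take j B)) (B ! j)" and j: "j < length (A @ B)"
  show "just Q (set (take j (A @ B))) ((A @ B) ! j)"
  proof (cases "j < length A")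
    case True then show ?thesis using vA by (simp add: nth_append)
  next
    case False
    then have "just Q (set (take (j - length A) B)) ((A @ B) ! j)"
      using vB j by (simp add: nth_append)
    moreover have "set (take (j - length A) B) \<subseteq> set (take j (A @ B))" using False by auto
    ultimately show ?thesis using just_mono by blast
  qed
qed

lemma valid_snoc: "valid Q A \<Longrightarrow> just Q (set A) y \<Longrightarrow> valid Q (A @ [y])"
  unfolding valid_def
proof (intro allI impI)
  fix j assume vA: "\<forall>j<length A. just Q (set (take j A)) (A ! j)" and y: "just Q (set A) y"
    and j: "j < length (A @ [y])"
  show "just Q (set (take j (A @ [y]))) ((A @ [y]) ! j)"
  proof (cases "j < length A")
    case True then show ?thesis using vA by (simp add: nth_append)
  next
    case False then have "j = length A" using j by simp
    then show ?thesis using y by simp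
  qed
qed

lemma valid_concat: "\<forall>D\<in>set Dss. valid Q D \<Longrightarrow> valid Q (concat Dss)"
  by (induction Dss) (auto intro: valid_append)

lemma choose_list:
  "\<forall>x\<in>set xs. \<exists>D. P x D \<Longrightarrow> \<exists>Dss. length Dss = length xs \<and> (\<forall>i<length xs. P (xs ! i) (Dss ! i))"
proof (induction xs)
  case Nil then show ?case by simp
next
  case (Cons x xs)
  then obtain Dss where "length Dss = length xs" "\<forall>i<length xs. P (xs ! i) (Dss ! i)" by auto
  moreover obtain D where "P x D" using Cons.prems by auto
  ultimately show ?case by (intro exI[of _ "D # Dss"]) (auto simp: nth_Cons split: nat.split)
qed

lemma nth_in_concat: "i < length Dss \<Longrightarrow> y \<in> set (Dss ! i) \<Longrightarrow> y \<in> set (concat Dss)"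
  by auto

lemma cert_complete: "\<exists>Ds. valid Q Ds \<and> ent1 (enc p) \<in> set Ds"
proof (induction p)
  case Zero
  show ?case by (intro exI[of _ "[ent1 (enc Zero)]"]) (simp add: valid_def just_def cert_def)
next
  case Succ
  show ?case by (intro exI[of _ "[ent1 (enc Succ)]"]) (simp add: valid_def just_def cert_def)
next
  case (Proj i)
  show ?case by (intro exI[of _ "[ent1 (enc (Proj i))]"]) (simp add: valid_def just_def cert_def)
next
  case Oracle
  show ?case by (intro exI[of _ "[ent1 (enc Oracle)]"]) (simp add: valid_def just_def cert_def)
next
  case (Comp f gs)
  obtain Df where Df: "valid Q Df" "ent1 (enc f) \<in> set Df" using Comp.IH(1) by blast
  obtain Dss where L: "length Dss = length gs"
    and Dss: "\<forall>i<length gs. valid Q (Dss ! i) \<and> ent1 (enc (gs ! i)) \<in> set (Dss ! i)"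
    using choose_list[of gs "\<lambda>g D. valid Q D \<and> ent1 (enc g) \<in> set D"] Comp.IH(2) by blast
  let ?A = "Df @ concat Dss"
  have vA: "valid Q ?A"
    using Df Dss L by (intro valid_append valid_concat) (auto simp: in_set_conv_nth)
  have all: "\<forall>i<lenc (list_encode (map enc gs)). ent1 (nthc i (list_encode (map enc gs))) \<in> set ?A"
  proof (intro allI impI)
    fix i assume "i < lenc (list_encode (map enc gs))"
    then have i: "i < length gs" by simp
    then have "ent1 (enc (gs ! i)) \<in> set (concat Dss)" using Dss L by (auto intro: nth_in_concat)
    then show "ent1 (nthc i (list_encode (map enc gs))) \<in> set ?A" using i by simp
  qed
  have "cert (set ?A) (enc (Comp f gs))"
    unfolding cert_def using all Df(2) by simp
  then have "just Q (set ?A) (ent1 (enc (Comp f gs)))" by (simp add: just_def)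
  then show ?case using vA valid_snoc by fastforce
next
  case (Prim f g)
  obtain Df where Df: "valid Q Df" "ent1 (enc f) \<in> set Df" using Prim.IH(1) by blast
  obtain Dg where Dg: "valid Q Dg" "ent1 (enc g) \<in> set Dg" using Prim.IH(2) by blast
  have "just Q (set (Df @ Dg)) (ent1 (enc (Prim f g)))"
    using Df Dg by (simp add: just_def cert_def)
  then show ?case using valid_snoc[OF valid_append[OF Df(1) Dg(1)]] by fastforce
next
  case (Mu f)
  obtain Df where Df: "valid Q Df" "ent1 (enc f) \<in> set Df" using Mu.IH(1) by blast
  have "just Q (set Df) (ent1 (enc (Mu f)))"
    using Df by (simp add: just_def cert_def)
  then show ?case using valid_snoc[OF Df(1)] by fastforce
qed

lemma hdc_Suc [simp]: "hdc (Suc (prod_encode (x, L))) = x" by (simp add: hdc_def)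
lemma tlc_Suc [simp]: "tlc (Suc (prod_encode (x, L))) = L" by (simp add: tlc_def)

declare consc_list [simp del]
declare consc_def [simp]

abbreviation "gr orc \<equiv> (\<lambda>x z. z = orc x)"

lemma add_ent: "valid Q A \<Longrightarrow> evj Q (set A) c a z \<Longrightarrow> \<exists>Ds. valid Q Ds \<and> ent0 c a z \<in> set Ds"
  by (intro exI[of _ "A @ [ent0 c a z]"]) (auto intro!: valid_snoc simp: just_def)

lemma cert_of: obtains Dc where "valid Q Dc" "ent1 (enc p) \<in> set Dc"
  using cert_complete by blast

lemma choose_idx: "\<forall>i<n. \<exists>D. P i D \<Longrightarrow> \<exists>Dss. length Dss = n \<and> (\<forall>i<n. P i (Dss ! i))"
  using choose_list[of "[0..<n]" P] by simp

lemma evj_comp: "ent1 c \<in> M \<Longrightarrow> pf c = 4 \<Longrightarrow> y \<in> M \<Longrightarrow> pf y = 0 \<Longrightarrow> jc y = pf (ps c) \<Longrightarrow> jz y = z \<Longrightarrow>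
   lenc (ja y) = lenc (ps (ps c)) \<Longrightarrow> (\<forall>i<lenc (ps (ps c)). ent0 (nthc i (ps (ps c))) a (nthc i (ja y)) \<in> M) \<Longrightarrow>
   evj Q M c a z"
  unfolding evj_def by (rule conjI, simp, rule disjI2, rule disjI2, rule disjI2, rule disjI2, rule disjI1, blast)
lemma evj_prim0: "ent1 c \<in> M \<Longrightarrow> pf c = 5 \<Longrightarrow> a \<noteq> 0 \<Longrightarrow> hdc a = 0 \<Longrightarrow> ent0 (pf (ps c)) (tlc a) z \<in> M \<Longrightarrow>
   evj Q M c a z"
  unfolding evj_def by (rule conjI, simp, rule disjI2, rule disjI2, rule disjI2, rule disjI2, rule disjI2, rule disjI1, blast)
lemma evj_primS: "ent1 c \<in> M \<Longrightarrow> pf c = 5 \<Longrightarrow> a \<noteq> 0 \<Longrightarrow> hdc a \<noteq> 0 \<Longrightarrow> y \<in> M \<Longrightarrow> pf y = 0 \<Longrightarrow> jc y = c \<Longrightarrow>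
   ja y = consc (hdc a - 1) (tlc a) \<Longrightarrow> ent0 (ps (ps c)) (consc (hdc a - 1) (consc (jz y) (tlc a))) z \<in> M \<Longrightarrow>
   evj Q M c a z"
  unfolding evj_def by (rule conjI, simp, rule disjI2, rule disjI2, rule disjI2, rule disjI2, rule disjI2, rule disjI1, blast)
lemma evj_mu: "ent1 c \<in> M \<Longrightarrow> pf c = 6 \<Longrightarrow> ent0 (ps c) (consc z a) 0 \<in> M \<Longrightarrow>
   (\<forall>m<z. \<exists>y\<in>M. pf y = 0 \<and> jc y = ps c \<and> ja y = consc m a \<and> jz y \<noteq> 0) \<Longrightarrow> evj Q M c a z"
  unfolding evj_def by (rule conjI, simp, rule disjI2, rule disjI2, rule disjI2, rule disjI2, rule disjI2, rule disjI2, blast)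

lemma eval_complete:
  "evalo orc p xs z \<Longrightarrow> \<exists>Ds. valid (gr orc) Ds \<and> ent0 (enc p) (list_encode xs) z \<in> set Ds"
proof (induction rule: evalo.induct)
  case (ev_zero xs)
  obtain Dc where "valid (gr orc) Dc" "ent1 (enc Zero) \<in> set Dc" by (rule cert_of)
  then show ?case by (intro add_ent) (auto simp: evj_def)
next
  case (ev_succ x xs)
  obtain Dc where "valid (gr orc) Dc" "ent1 (enc Succ) \<in> set Dc" by (rule cert_of)
  then show ?case by (intro add_ent) (auto simp: evj_def)
next
  case (ev_proj i xs)
  obtain Dc where "valid (gr orc) Dc" "ent1 (enc (Proj i)) \<in> set Dc" by (rule cert_of)
  then show ?case using ev_proj by (intro add_ent) (auto simp: evj_def)
next
  case (ev_oracle x xs)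
  obtain Dc where "valid (gr orc) Dc" "ent1 (enc Oracle) \<in> set Dc" by (rule cert_of)
  then show ?case by (intro add_ent) (auto simp: evj_def)
next
  case (ev_comp xs gs ys f z)
  have L: "list_all2 (\<lambda>g y. \<exists>Ds. valid (gr orc) Ds \<and> ent0 (enc g) (list_encode xs) y \<in> set Ds) gs ys"
    using ev_comp(1) by (rule list_all2_mono) auto
  then have len: "length gs = length ys" by (simp add: list_all2_lengthD)
  from L have "\<forall>i<length gs. \<exists>D. valid (gr orc) D \<and> ent0 (enc (gs ! i)) (list_encode xs) (ys ! i) \<in> set D"
    by (auto simp: list_all2_conv_all_nth)
  from choose_idx[OF this] obtain Dss where Dl: "length Dss = length gs"
    and Dss: "\<forall>i<length gs. valid (gr orc) (Dss ! i) \<and> ent0 (enc (gs ! i)) (list_encode xs) (ys ! i) \<in> set (Dss ! i)"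
    by blast
  obtain Df where Df: "valid (gr orc) Df" "ent0 (enc f) (list_encode ys) z \<in> set Df" using ev_comp(2) by blast
  obtain Dc where Dc: "valid (gr orc) Dc" "ent1 (enc (Comp f gs)) \<in> set Dc" by (rule cert_of)
  let ?A = "Dc @ concat Dss @ Df"
  have vA: "valid (gr orc) ?A"
    using Dc Df Dss Dl by (intro valid_append valid_concat) (auto simp: in_set_conv_nth)
  have w: "ent0 (enc f) (list_encode ys) z \<in> set ?A" using Df by simp
  have all: "\<forall>i<length gs. ent0 (enc (gs ! i)) (list_encode xs) (ys ! i) \<in> set ?A"
    using Dss Dl by (auto intro: nth_in_concat)
  have "evj (gr orc) (set ?A) (enc (Comp f gs)) (list_encode xs) z"
    using Dc(2) w all len by (intro evj_comp[where y="ent0 (enc f) (list_encode ys) z"]) simp_all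
  then show ?case by (rule add_ent[OF vA])
next
  case (ev_prim0 f xs z g)
  obtain Df where Df: "valid (gr orc) Df" "ent0 (enc f) (list_encode xs) z \<in> set Df" using ev_prim0.IH by blast
  obtain Dc where Dc: "valid (gr orc) Dc" "ent1 (enc (Prim f g)) \<in> set Dc" by (rule cert_of)
  have "evj (gr orc) (set (Dc @ Df)) (enc (Prim f g)) (list_encode (0 # xs)) z"
    using Dc(2) Df(2) by (intro evj_prim0) simp_all
  then show ?case by (rule add_ent[OF valid_append[OF Dc(1) Df(1)]])
next
  case (ev_primS f g n xs y z)
  obtain D1 where D1: "valid (gr orc) D1" "ent0 (enc (Prim f g)) (list_encode (n # xs)) y \<in> set D1" using ev_primS.IH(1) by blast
  obtain D2 where D2: "valid (gr orc) D2" "ent0 (enc g) (list_encode (n # y # xs)) z \<in> set D2" using ev_primS.IH(2) by blast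
  obtain Dc where Dc: "valid (gr orc) Dc" "ent1 (enc (Prim f g)) \<in> set Dc" by (rule cert_of)
  let ?A = "Dc @ D1 @ D2"
  have w: "ent0 (enc (Prim f g)) (list_encode (n # xs)) y \<in> set ?A" using D1 by simp
  have "evj (gr orc) (set ?A) (enc (Prim f g)) (list_encode (Suc n # xs)) z"
    using Dc(2) D2(2) w by (intro evj_primS[where y="ent0 (enc (Prim f g)) (list_encode (n # xs)) y"])
      simp_all
  then show ?case by (rule add_ent[OF valid_append[OF Dc(1) valid_append[OF D1(1) D2(1)]]])
next
  case (ev_mu f n xs)
  obtain D0 where D0: "valid (gr orc) D0" "ent0 (enc f) (list_encode (n # xs)) 0 \<in> set D0" using ev_mu.IH by blast
  have "\<forall>m<n. \<exists>D. \<exists>v. valid (gr orc) D \<and> ent0 (enc f) (list_encode (m # xs)) (Suc v) \<in> set D"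
    using ev_mu(3) by blast
  from choose_idx[OF this] obtain Dss where Dl: "length Dss = n"
    and Dss: "\<forall>m<n. \<exists>v. valid (gr orc) (Dss ! m) \<and> ent0 (enc f) (list_encode (m # xs)) (Suc v) \<in> set (Dss ! m)"
    by blast
  obtain Dc where Dc: "valid (gr orc) Dc" "ent1 (enc (Mu f)) \<in> set Dc" by (rule cert_of)
  let ?A = "Dc @ D0 @ concat Dss"
  have vA: "valid (gr orc) ?A"
    using Dc D0 Dss Dl by (intro valid_append valid_concat) (auto simp: in_set_conv_nth)
  have ms: "\<forall>m<n. \<exists>y\<in>set ?A. pf y = 0 \<and> jc y = enc f \<and> ja y = consc m (list_encode xs) \<and> jz y \<noteq> 0"
  proof (intro allI impI)
    fix m assume m: "m < n"
    then obtain v where "ent0 (enc f) (list_encode (m # xs)) (Suc v) \<in> set (Dss ! m)" using Dss by blast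
    then have "ent0 (enc f) (list_encode (m # xs)) (Suc v) \<in> set ?A" using m Dl by (auto intro: nth_in_concat)
    then show "\<exists>y\<in>set ?A. pf y = 0 \<and> jc y = enc f \<and> ja y = consc m (list_encode xs) \<and> jz y \<noteq> 0"
      by (intro bexI) (auto simp: consc_def)
  qed
  have "ent0 (enc f) (consc n (list_encode xs)) 0 \<in> set ?A" using D0 by (simp add: consc_def)
  then have "evj (gr orc) (set ?A) (enc (Mu f)) (list_encode xs) n"
    using Dc(2) ms by (intro evj_mu) simp_all
  then show ?case by (rule add_ent[OF vA])
qed

definition VV :: "(nat \<Rightarrow> nat \<Rightarrow> bool) \<Rightarrow> nat \<Rightarrow> nat \<Rightarrow> nat \<Rightarrow> bool" where
  "VV Q w c a \<longleftrightarrow> valid Q (list_decode (pf w)) \<and> ent0 c a (ps w) \<in> set (list_decode (pf w))"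

lemma V_sound:
  assumes "VV Q w c a" "\<forall>x z. Q x z \<longrightarrow> z = orc x"
  shows "(\<exists>p. enc p = c) \<and> (\<forall>p. enc p = c \<longrightarrow> evalo orc p (list_decode a) (ps w))"
proof -
  have "good orc (ent0 c a (ps w))" using valid_good[of Q _ orc] assms unfolding VV_def by blast
  then show ?thesis by (simp add: good_def)
qed

lemma V_complete:
  assumes "evalo orc p xs z"
  shows "\<exists>w. VV (gr orc) w (enc p) (list_encode xs) \<and> ps w = z"
proof -
  obtain Ds where "valid (gr orc) Ds" "ent0 (enc p) (list_encode xs) z \<in> set Ds"
    using eval_complete[OF assms] by blast
  then show ?thesis by (intro exI[of _ "prod_encode (list_encode Ds, z)"]) (simp add: VV_def)
qed

lemma mem_le_list_encode: "y \<in> set xs \<Longrightarrow> y \<le> list_encode xs"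
proof (induction xs)
  case (Cons x xs)
  have "x \<le> prod_encode (x, list_encode xs)" "list_encode xs \<le> prod_encode (x, list_encode xs)"
    by (rule le_prod_encode_1, rule le_prod_encode_2)
  then show ?case using Cons by auto
qed simp

lemma hdc_le: "hdc a \<le> a" unfolding hdc_def using pf_le[of "a - 1"] by simp

lemma ja_le: "ja y \<le> y" unfolding ja_def using pf_le[of "ps (ps y)"] ps_le[of "ps y"] ps_le[of y] by simp

lemma evj_Qmono:
  assumes "evj Q M c a z" "\<forall>z. Q (hdc a) z \<longrightarrow> Q' (hdc a) z"
  shows "evj Q' M c a z"
  using assms unfolding evj_def
  apply (elim conjE disjE)
  apply simp_all
  done

lemma V_mono:
  assumes V: "VV Q w c a" and QQ: "\<forall>x z. x \<le> w \<longrightarrow> Q x z \<longrightarrow> Q' x z"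
  shows "VV Q' w c a"
proof -
  let ?Ds = "list_decode (pf w)"
  have le: "y \<in> set ?Ds \<Longrightarrow> y \<le> w" for y
    using mem_le_list_encode[of y ?Ds] pf_le[of w] by simp
  have "just Q' (set (take j ?Ds)) (?Ds ! j)" if j: "j < length ?Ds" for j
  proof -
    have jj: "just Q (set (take j ?Ds)) (?Ds ! j)" using V j by (simp add: VV_def valid_def)
    have yw: "?Ds ! j \<le> w" using le j by simp
    have "hdc (ja (?Ds ! j)) \<le> w" using hdc_le ja_le yw le_trans by blast
    then have "\<forall>z. Q (hdc (ja (?Ds ! j))) z \<longrightarrow> Q' (hdc (ja (?Ds ! j))) z" using QQ by blast
    then show ?thesis using jj evj_Qmono unfolding just_def by blast
  qed
  then show ?thesis using V by (simp add: VV_def valid_def)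
qed

definition evb :: "ex \<Rightarrow> nat list \<Rightarrow> bool" where "evb e env \<longleftrightarrow> eval e env \<noteq> 0"

lemma evb_simps [simp]:
  "evb (eqx a b) env \<longleftrightarrow> eval a env = eval b env"
  "evb (ltx a b) env \<longleftrightarrow> eval a env < eval b env"
  "evb (cnj a b) env \<longleftrightarrow> evb a env \<and> evb b env"
  "evb (dsj a b) env \<longleftrightarrow> evb a env \<or> evb b env"
  "evb (nt a) env \<longleftrightarrow> \<not> evb a env"
  "evb (bex n b) env \<longleftrightarrow> (\<exists>i<eval n env. evb b (i # env))"
  "evb (ball n b) env \<longleftrightarrow> (\<forall>i<eval n env. evb b (i # env))"
  "evb (Cp e as) env \<longleftrightarrow> evb e (map (\<lambda>a. eval a env) as)"
  by (auto simp: evb_def)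

definition inD :: "nat \<Rightarrow> nat \<Rightarrow> nat \<Rightarrow> bool" where "inD j D v \<longleftrightarrow> (\<exists>l<j. nthc l D = v)"

lemma Bex_inD [simp]: "(\<exists>y\<in>{v. inD j D v}. P y) \<longleftrightarrow> (\<exists>l<j. P (nthc l D))"
  by (auto simp: inD_def)

lemma ex_inD [simp]: "(\<exists>y. inD j D y \<and> P y) \<longleftrightarrow> (\<exists>l<j. P (nthc l D))"
  by (auto simp: inD_def)

lemma inD_full [simp]: "inD (length Ds) (list_encode Ds) v \<longleftrightarrow> v \<in> set Ds"
  by (auto simp: inD_def in_set_conv_nth)

lemma inD_take: "j \<le> length Ds \<Longrightarrow> {v. inD j (list_encode Ds) v} = set (take j Ds)"
  apply (auto simp: inD_def in_set_conv_nth)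
  apply (rule_tac x=l in exI, simp)
  apply (rule_tac x=i in exI, simp)
  done

definition "MEMX = bex (V 1) (eqx (nthx (V 0) (V 3)) (V 1))"
lemma evb_MEMX [simp]: "evb MEMX [v, j, D] \<longleftrightarrow> inD j D v"
  by (simp add: MEMX_def inD_def)
lemma wfx_MEMX [simp]: "wfx (Suc (Suc (Suc 0))) MEMX" by (simp add: MEMX_def)
lemma fok_MEMX [simp]: "fok orc MEMX" by (simp add: MEMX_def)

definition "ent0x c a z = penc Z (penc c (penc a z))"
definition "jcx y = pfx (psx y)"
definition "jax y = pfx (psx (psx y))"
definition "jzx y = psx (psx (psx y))"
lemma ent_x [simp]:
  "eval (ent0x c a z) env = ent0 (eval c env) (eval a env) (eval z env)"
  "eval (jcx y) env = jc (eval y env)"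
  "eval (jax y) env = ja (eval y env)"
  "eval (jzx y) env = jz (eval y env)"
  "wfx k (ent0x c a z) = (wfx k c \<and> wfx k a \<and> wfx k z)"
  "wfx k (jcx y) = wfx k y" "wfx k (jax y) = wfx k y" "wfx k (jzx y) = wfx k y"
  "fok orc (ent0x c a z) = (fok orc c \<and> fok orc a \<and> fok orc z)"
  "fok orc (jcx y) = fok orc y" "fok orc (jax y) = fok orc y" "fok orc (jzx y) = fok orc y"
  by (auto simp: ent0x_def jcx_def jax_def jzx_def ent0_def jc_def ja_def jz_def)

definition "CERTX = (let mem = (\<lambda>v. Cp MEMX [v, V 1, V 2]) in
  dsj (eqx (V 0) (cst (prod_encode (0, 0))))
  (dsj (eqx (V 0) (cst (prod_encode (1, 0))))
  (dsj (eqx (V 0) (cst (prod_encode (3, 0))))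
  (dsj (eqx (pfx (V 0)) (cst 2))
  (dsj (cnj (eqx (pfx (V 0)) (cst 4)) (cnj (mem (penc (cst 1) (pfx (psx (V 0)))))
        (ball (lenx (psx (psx (V 0)))) (Cp MEMX [penc (cst 1) (nthx (V 0) (psx (psx (V 1)))), V 2, V 3]))))
  (dsj (cnj (eqx (pfx (V 0)) (cst 5)) (cnj (mem (penc (cst 1) (pfx (psx (V 0))))) (mem (penc (cst 1) (psx (psx (V 0)))))))
       (cnj (eqx (pfx (V 0)) (cst 6)) (mem (penc (cst 1) (psx (V 0)))))))))))"

lemma evb_CERTX [simp]: "evb CERTX [c, j, D] \<longleftrightarrow> cert {v. inD j D v} c"
  unfolding CERTX_def cert_def ent1_def by simp

definition "EVJX oc = (let mem = (\<lambda>v. Cp MEMX [v, V 3, V 4]) in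
  cnj (mem (penc (cst 1) (V 0)))
  (dsj (cnj (eqx (V 0) (cst (prod_encode (0, 0)))) (eqx (V 2) Z))
  (dsj (cnj (eqx (V 0) (cst (prod_encode (1, 0)))) (cnj (nt (eqx (V 1) Z)) (eqx (V 2) (S (hdx (V 1))))))
  (dsj (cnj (eqx (pfx (V 0)) (cst 2)) (cnj (ltx (psx (V 0)) (lenx (V 1))) (eqx (V 2) (nthx (psx (V 0)) (V 1)))))
  (dsj (cnj (eqx (V 0) (cst (prod_encode (3, 0)))) (cnj (nt (eqx (V 1) Z)) (Cp oc [hdx (V 1), V 2, V 5])))
  (dsj (cnj (eqx (pfx (V 0)) (cst 4))
         (bex (V 3) (let y = nthx (V 0) (V 5) in
            cnj (eqx (pfx y) Z) (cnj (eqx (jcx y) (pfx (psx (V 1)))) (cnj (eqx (jzx y) (V 3))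
            (cnj (eqx (lenx (jax y)) (lenx (psx (psx (V 1)))))
             (ball (lenx (psx (psx (V 1))))
               (Cp MEMX [ent0x (nthx (V 0) (psx (psx (V 2)))) (V 3) (nthx (V 0) (jax (nthx (V 1) (V 6)))), V 5, V 6]))))))))
  (dsj (cnj (eqx (pfx (V 0)) (cst 5)) (cnj (nt (eqx (V 1) Z))
         (dsj (cnj (eqx (hdx (V 1)) Z) (mem (ent0x (pfx (psx (V 0))) (tlx (V 1)) (V 2))))
              (cnj (nt (eqx (hdx (V 1)) Z))
                (bex (V 3) (let y = nthx (V 0) (V 5) in
                  cnj (eqx (pfx y) Z) (cnj (eqx (jcx y) (V 1))
                  (cnj (eqx (jax y) (consx (sub (hdx (V 2)) (cst 1)) (tlx (V 2))))
                  (Cp MEMX [ent0x (psx (psx (V 1))) (consx (sub (hdx (V 2)) (cst 1)) (consx (jzx y) (tlx (V 2)))) (V 3), V 4, V 5])))))))))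
  (cnj (eqx (pfx (V 0)) (cst 6)) (cnj (mem (ent0x (psx (V 0)) (consx (V 2) (V 1)) Z))
      (ball (V 2) (bex (V 4) (let y = nthx (V 0) (V 6) in
          cnj (eqx (pfx y) Z) (cnj (eqx (jcx y) (psx (V 2))) (cnj (eqx (jax y) (consx (V 1) (V 3))) (nt (eqx (jzx y) Z))))))))))))))))"

lemma evb_EVJX [simp]: "evb (EVJX oc) [c, a, z, j, D, prm] \<longleftrightarrow> evj (\<lambda>x z. evb oc [x, z, prm]) {v. inD j D v} c a z"
  unfolding EVJX_def evj_def ent1_def by (simp add: Let_def)

definition "JUSTX oc = (let y = nthx (V 0) (V 1) in
  dsj (cnj (eqx (pfx y) (cst 1)) (Cp CERTX [psx y, V 0, V 1]))
      (cnj (eqx (pfx y) Z) (Cp (EVJX oc) [jcx y, jax y, jzx y, V 0, V 1, V 2])))"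

lemma evb_JUSTX [simp]: "evb (JUSTX oc) [j, D, prm] \<longleftrightarrow> just (\<lambda>x z. evb oc [x, z, prm]) {v. inD j D v} (nthc j D)"
  unfolding JUSTX_def just_def by (simp add: Let_def)

definition "VALIDX oc = ball (lenx (V 0)) (Cp (JUSTX oc) [V 0, V 1, V 2])"

lemma evb_VALIDX [simp]: "evb (VALIDX oc) [D, prm] \<longleftrightarrow> valid (\<lambda>x z. evb oc [x, z, prm]) (list_decode D)"
proof -
  obtain Ds where D: "D = list_encode Ds" by (metis list_decode_inverse)
  show ?thesis unfolding VALIDX_def valid_def D by (simp add: inD_take)
qed

definition "VX oc = cnj (Cp (VALIDX oc) [pfx (V 0), V 3]) (Cp MEMX [ent0x (V 1) (V 2) (psx (V 0)), lenx (pfx (V 0)), pfx (V 0)])"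

lemma evb_VX [simp]: "evb (VX oc) [w, c, a, prm] \<longleftrightarrow> VV (\<lambda>x z. evb oc [x, z, prm]) w c a"
proof -
  obtain Ds where D: "pf w = list_encode Ds" by (metis list_decode_inverse)
  show ?thesis unfolding VX_def VV_def by (simp add: D)
qed

lemma wfx_CERTX [simp]: "wfx (Suc (Suc (Suc 0))) CERTX"
  by (simp add: CERTX_def Let_def)
lemma wfx_EVJX [simp]: "wfx (Suc (Suc (Suc 0))) oc \<Longrightarrow> wfx (Suc (Suc (Suc (Suc (Suc (Suc 0)))))) (EVJX oc)"
  by (simp add: EVJX_def Let_def)
lemma wfx_JUSTX [simp]: "wfx (Suc (Suc (Suc 0))) oc \<Longrightarrow> wfx (Suc (Suc (Suc 0))) (JUSTX oc)"
  by (simp add: JUSTX_def Let_def)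
lemma wfx_VALIDX [simp]: "wfx (Suc (Suc (Suc 0))) oc \<Longrightarrow> wfx (Suc (Suc 0)) (VALIDX oc)"
  by (simp add: VALIDX_def)
lemma wfx_VX [simp]: "wfx (Suc (Suc (Suc 0))) oc \<Longrightarrow> wfx (Suc (Suc (Suc (Suc 0)))) (VX oc)"
  by (simp add: VX_def)

lemma fok_VX [simp]: "fok orc (VX oc) = fok orc oc"
  by (simp add: VX_def VALIDX_def JUSTX_def EVJX_def CERTX_def Let_def)

lemma comp_by_orc: "comp_by orc orc"
  unfolding comp_by_def by (intro exI[of _ Oracle]) (auto intro: ev_oracle)

lemma ex_comp: "wfx (Suc 0) e \<Longrightarrow> fok orc e \<Longrightarrow> comp_by orc (\<lambda>x. eval e [x])"
proof -
  assume "wfx (Suc 0) e" "fok orc e"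
  then obtain p where p: "\<forall>env. length env = Suc 0 \<longrightarrow> evalo orc p env (eval e env)"
    using compile[of "Suc 0" e orc] by auto
  have "evalo orc p [x] (eval e [x])" for x using p by simp
  then show ?thesis unfolding comp_by_def by blast
qed

lemma ex_comp': "wfx (Suc 0) e \<Longrightarrow> fok orc e \<Longrightarrow> (\<And>x. eval e [x] = F x) \<Longrightarrow> comp_by orc F"
  using ex_comp[of e orc] by simp

lemma mu_comp:
  assumes "wfx (Suc (Suc 0)) e" "fok orc e" "\<forall>x. \<exists>w. eval e [w, x] = 0"
  shows "comp_by orc (\<lambda>x. LEAST w. eval e [w, x] = 0)"
proof -
  obtain p where p: "\<forall>env. length env = Suc (Suc 0) \<longrightarrow> evalo orc p env (eval e env)"
    using compile[of "Suc (Suc 0)" e orc] assms by auto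
  have "evalo orc (Mu p) [x] (LEAST w. eval e [w, x] = 0)" for x
  proof (rule ev_mu)
    show "evalo orc p [LEAST w. eval e [w, x] = 0, x] 0"
      using p LeastI_ex[of "\<lambda>w. eval e [w, x] = 0"] assms(3) by (metis length_Cons list.size(3) numeral_2_eq_2 Suc_1)
    show "\<forall>m<LEAST w. eval e [w, x] = 0. \<exists>v. evalo orc p [m, x] (Suc v)"
    proof (intro allI impI)
      fix m assume "m < (LEAST w. eval e [w, x] = 0)"
      then have "eval e [m, x] \<noteq> 0" using not_less_Least by blast
      then obtain v where "eval e [m, x] = Suc v" using not0_implies_Suc by blast
      then show "\<exists>v. evalo orc p [m, x] (Suc v)" using p by (metis length_Cons list.size(3))
    qed
  qed
  then show ?thesis unfolding comp_by_def by blast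
qed

inductive_cases zeroE: "evalo orc Zero xs z"
inductive_cases succE: "evalo orc Succ xs z"
inductive_cases projE: "evalo orc (Proj i) xs z"
inductive_cases oracleE: "evalo orc Oracle xs z"
inductive_cases compE: "evalo orc (Comp f gs) xs z"
inductive_cases primE: "evalo orc (Prim f g) xs z"
inductive_cases muE: "evalo orc (Mu f) xs z"

lemma evalo_det: "evalo orc p xs a \<Longrightarrow> evalo orc p xs b \<Longrightarrow> a = b"
proof (induction arbitrary: b rule: evalo.induct)
  case (ev_zero xs) from ev_zero.prems show ?case by (rule zeroE) simp
next
  case (ev_succ x xs) from ev_succ.prems show ?case by (rule succE) simp
next
  case (ev_proj i xs) from ev_proj.prems show ?case by (rule projE) simp
next
  case (ev_oracle x xs) from ev_oracle.prems show ?case by (rule oracleE) simp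
next
  case (ev_comp xs gs ys f z)
  from ev_comp.prems obtain ys' where L: "list_all2 (\<lambda>g y. evalo orc g xs y) gs ys'" and F: "evalo orc f ys' b"
    by (rule compE) blast
  have l1: "length ys = length gs" "length ys' = length gs"
    using ev_comp(1) L by (auto dest: list_all2_lengthD)
  have "\<forall>i<length gs. ys ! i = ys' ! i"
  proof (intro allI impI)
    fix i assume i: "i < length gs"
    have "\<forall>b. evalo orc (gs ! i) xs b \<longrightarrow> ys ! i = b"
      using ev_comp(1) i by (simp add: list_all2_conv_all_nth)
    moreover have "evalo orc (gs ! i) xs (ys' ! i)" using L i by (simp add: list_all2_conv_all_nth)
    ultimately show "ys ! i = ys' ! i" by blast
  qed
  then have "ys = ys'" using l1 by (simp add: list_eq_iff_nth_eq)
  then show ?case using ev_comp(2) F by blast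
next
  case (ev_prim0 f xs z g)
  from ev_prim0.prems show ?case
  proof (rule primE)
    fix xs' assume "0 # xs = 0 # xs'" "evalo orc f xs' b"
    then show "z = b" using ev_prim0.IH by simp
  next
    fix n xs' y assume "0 # xs = Suc n # xs'"
    then show "z = b" by simp
  qed
next
  case (ev_primS f g n xs y z)
  from ev_primS.prems show ?case
  proof (rule primE)
    fix xs' assume "Suc n # xs = 0 # xs'"
    then show "z = b" by simp
  next
    fix n' xs' y' assume e: "Suc n # xs = Suc n' # xs'" and a: "evalo orc (Prim f g) (n' # xs') y'"
      and c: "evalo orc g (n' # y' # xs') b"
    from e have "n' = n" "xs' = xs" by auto
    then have "y' = y" using a ev_primS.IH(1) by simp
    then show "z = b" using c ev_primS.IH(2) \<open>n' = n\<close> \<open>xs' = xs\<close> by simp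
  qed
next
  case (ev_mu f n xs)
  from ev_mu.prems obtain n' where b: "b = n'" and z: "evalo orc f (n' # xs) 0"
    and lt: "\<forall>m<n'. \<exists>v. evalo orc f (m # xs) (Suc v)"
    by (rule muE) blast
  have "\<not> n < n'"
  proof
    assume "n < n'" then obtain v where v: "evalo orc f (n # xs) (Suc v)" using lt by blast
    have "0 = Suc v" using ev_mu.IH(1) v by blast
    then show False by simp
  qed
  moreover have "\<not> n' < n"
  proof
    assume "n' < n" then obtain v where "\<forall>b. evalo orc f (n' # xs) b \<longrightarrow> Suc v = b"
      using ev_mu.IH(2) by blast
    then show False using z by blast
  qed
  ultimately show ?case using b by simp
qed

lemma map_inj_eq: "\<forall>x\<in>set xs. \<forall>y. f x = f y \<longrightarrow> x = y \<Longrightarrow> map f xs = map f ys \<Longrightarrow> xs = ys"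
proof (induction xs arbitrary: ys)
  case Nil then show ?case by simp
next
  case (Cons x xs) then show ?case by (cases ys) auto
qed

lemma enc_inj: "enc p = enc q \<Longrightarrow> p = q"
proof (induction p arbitrary: q)
  case (Comp f gs)
  from Comp.prems obtain f' gs' where q: "q = Comp f' gs'" by (cases q) auto
  with Comp.prems have "enc f = enc f'" "list_encode (map enc gs) = list_encode (map enc gs')" by auto
  then have "f = f'" "map enc gs = map enc gs'" using Comp.IH(1) by (auto simp: list_encode_eq)
  moreover have "gs = gs'" using map_inj_eq[OF _ \<open>map enc gs = map enc gs'\<close>] Comp.IH(2) by blast
  ultimately show ?case using q by simp
next
  case (Prim f g) then show ?case by (cases q) auto
next
  case (Mu f) then show ?case by (cases q) auto
qed (case_tac q; auto)+

primrec Kp :: "nat \<Rightarrow> rf" where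
  "Kp 0 = Zero"
| "Kp (Suc v) = Comp Succ [Kp v]"

lemma Kp_eval: "evalo orc (Kp v) xs v"
proof (induction v)
  case 0 then show ?case by (simp add: ev_zero)
next
  case (Suc v)
  have "list_all2 (\<lambda>g y. evalo orc g xs y) [Kp v] [v]" using Suc by simp
  then show ?case by (simp, rule ev_comp) (rule ev_succ)
qed

definition "KC = Rec (V 0) (cst (enc Zero)) (penc (cst 4) (penc (cst (enc Succ)) (consx (V 1) Z)))"
lemma eval_KC [simp]: "eval KC [v] = enc (Kp v)"
  by (induction v) (simp_all add: KC_def)
lemma wfx_KC [simp]: "wfx (Suc 0) KC" by (simp add: KC_def)
lemma fok_KC [simp]: "fok orc KC" by (simp add: KC_def)

definition "Q0 = (\<lambda>x z::nat. z = (0::nat))"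
definition "QT = (\<lambda>r x z. x < pf r \<and> z = nthc (pf r - Suc x) (ps r))"
definition "ocZ = eqx (V 1) Z"
definition "ocT = cnj (ltx (V 0) (pfx (V 2))) (eqx (V 1) (nthx (sub (pfx (V 2)) (S (V 0))) (psx (V 2))))"
definition "ocG F = eqx (V 1) (Fn F (V 0))"

lemma oc_simps [simp]:
  "(\<lambda>x z. evb ocZ [x, z, r]) = Q0"
  "(\<lambda>x z. evb ocT [x, z, r]) = QT r"
  "(\<lambda>x z. evb (ocG F) [x, z, r]) = gr F"
  by (auto simp: ocZ_def ocT_def ocG_def Q0_def QT_def)

lemma oc_wf [simp]:
  "wfx (Suc (Suc (Suc 0))) ocZ" "wfx (Suc (Suc (Suc 0))) ocT" "wfx (Suc (Suc (Suc 0))) (ocG F)"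
  "fok orc ocZ" "fok orc ocT" "fok orc (ocG F) = comp_by orc F"
  by (auto simp: ocZ_def ocT_def ocG_def)

lemma gr0: "gr (\<lambda>_. 0) = Q0" by (simp add: Q0_def)

lemma halt_char: "n \<in> halting \<longleftrightarrow> (\<exists>w. VV Q0 w n (list_encode [n]))"
proof
  assume "n \<in> halting"
  then obtain p v where "enc p = n" "evalo (\<lambda>_. 0) p [n] v" by (auto simp: halting_def)
  then show "\<exists>w. VV Q0 w n (list_encode [n])" using V_complete[of "\<lambda>_. 0" p "[n]" v] by (auto simp: Q0_def)
next
  assume "\<exists>w. VV Q0 w n (list_encode [n])"
  then obtain w where w: "VV Q0 w n (list_encode [n])" by blast
  have "\<forall>x z. Q0 x z \<longrightarrow> z = (\<lambda>_. 0) x" by (simp add: Q0_def)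
  from V_sound[OF w this] obtain p where "enc p = n" "evalo (\<lambda>_. 0) p [n] (ps w)" by auto
  then show "n \<in> halting" by (auto simp: halting_def)
qed

definition "PT = nt (Cp (VX ocT) [V 0, V 1, V 2, V 3])"
lemma eval_PT: "eval PT [w, c, a, r] = 0 \<longleftrightarrow> VV (QT r) w c a"
proof -
  have "evb (VX ocT) [w, c, a, r] \<longleftrightarrow> VV (QT r) w c a" by simp
  then show ?thesis unfolding PT_def evb_def by (simp; auto)
qed
lemma wfx_PT: "wfx (Suc (Suc (Suc (Suc 0)))) PT" by (simp add: PT_def)
lemma fok_PT: "fok orc PT" by (simp add: PT_def)

definition SPROG :: rf where
  "SPROG = Mu (SOME P. \<forall>env. length env = Suc (Suc (Suc (Suc 0))) \<longrightarrow> evalo (\<lambda>_. 0) P env (eval PT env))"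

lemma SPROG_halts: "(\<exists>v. evalo (\<lambda>_. 0) SPROG [c, a, r] v) \<longleftrightarrow> (\<exists>w. VV (QT r) w c a)"
proof -
  define P where "P = (SOME P. \<forall>env. length env = Suc (Suc (Suc (Suc 0))) \<longrightarrow> evalo (\<lambda>_. 0) P env (eval PT env))"
  have "\<exists>P. \<forall>env. length env = Suc (Suc (Suc (Suc 0))) \<longrightarrow> evalo (\<lambda>_. 0) P env (eval PT env)"
    using compile[OF wfx_PT fok_PT] by blast
  then have P: "\<forall>env. length env = Suc (Suc (Suc (Suc 0))) \<longrightarrow> evalo (\<lambda>_. 0) P env (eval PT env)"
    unfolding P_def by (rule someI_ex)
  then have Pe: "evalo (\<lambda>_. 0) P [w, c, a, r] (eval PT [w, c, a, r])" for w by simp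
  show ?thesis
  proof
    assume "\<exists>v. evalo (\<lambda>_. 0) SPROG [c, a, r] v"
    then obtain v where "evalo (\<lambda>_. 0) (Mu P) [c, a, r] v" by (auto simp: SPROG_def P_def)
    then have "evalo (\<lambda>_. 0) P [v, c, a, r] 0" by (rule muE) simp
    then have "eval PT [v, c, a, r] = 0" using Pe evalo_det by metis
    then show "\<exists>w. VV (QT r) w c a" using eval_PT by blast
  next
    assume "\<exists>w. VV (QT r) w c a"
    then have ex: "\<exists>w. eval PT [w, c, a, r] = 0" using eval_PT by blast
    let ?n = "LEAST w. eval PT [w, c, a, r] = 0"
    have "evalo (\<lambda>_. 0) (Mu P) [c, a, r] ?n"
    proof (rule ev_mu)
      show "evalo (\<lambda>_. 0) P [?n, c, a, r] 0" using Pe[of ?n] LeastI_ex[OF ex] by simp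
      show "\<forall>m<?n. \<exists>v. evalo (\<lambda>_. 0) P [m, c, a, r] (Suc v)"
      proof (intro allI impI)
        fix m assume "m < ?n"
        then have "eval PT [m, c, a, r] \<noteq> 0" using not_less_Least by blast
        then show "\<exists>v. evalo (\<lambda>_. 0) P [m, c, a, r] (Suc v)" using Pe[of m] by (metis not0_implies_Suc)
      qed
    qed
    then show "\<exists>v. evalo (\<lambda>_. 0) SPROG [c, a, r] v" by (auto simp: SPROG_def P_def)
  qed
qed

definition qc :: "nat \<Rightarrow> nat \<Rightarrow> nat \<Rightarrow> nat" where
  "qc c a r = enc (Comp SPROG [Kp c, Kp a, Kp r])"

lemma qc_halting: "qc c a r \<in> halting \<longleftrightarrow> (\<exists>w. VV (QT r) w c a)"
proof -
  let ?q = "Comp SPROG [Kp c, Kp a, Kp r]"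
  have L: "list_all2 (\<lambda>g y. evalo (\<lambda>_. 0) g xs y) [Kp c, Kp a, Kp r] [c, a, r]" for xs
    by (simp add: Kp_eval)
  have "qc c a r \<in> halting \<longleftrightarrow> (\<exists>v. evalo (\<lambda>_. 0) ?q [qc c a r] v)"
    unfolding halting_def qc_def using enc_inj by blast
  also have "\<dots> \<longleftrightarrow> (\<exists>v. evalo (\<lambda>_. 0) SPROG [c, a, r] v)"
  proof
    assume "\<exists>v. evalo (\<lambda>_. 0) ?q [qc c a r] v"
    then obtain v ys where L': "list_all2 (\<lambda>g y. evalo (\<lambda>_. 0) g [qc c a r] y) [Kp c, Kp a, Kp r] ys"
      and E: "evalo (\<lambda>_. 0) SPROG ys v" by (auto elim: compE)
    have "ys = [c, a, r]"
    proof -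
      obtain y1 y2 y3 where ys: "ys = [y1, y2, y3]" using L' by (auto simp: list_all2_Cons1)
      then show ?thesis using L' evalo_det Kp_eval by (metis list_all2_Cons)
    qed
    then show "\<exists>v. evalo (\<lambda>_. 0) SPROG [c, a, r] v" using E by blast
  next
    assume "\<exists>v. evalo (\<lambda>_. 0) SPROG [c, a, r] v"
    then show "\<exists>v. evalo (\<lambda>_. 0) ?q [qc c a r] v" using L ev_comp by blast
  qed
  finally show ?thesis using SPROG_halts by simp
qed

definition "QCX c a r = penc (cst 4) (penc (cst (enc SPROG)) (consx (Cp KC [c]) (consx (Cp KC [a]) (consx (Cp KC [r]) Z))))"
lemma eval_QCX [simp]: "eval (QCX c a r) env = qc (eval c env) (eval a env) (eval r env)"
  by (simp add: QCX_def qc_def)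
lemma wfx_QCX [simp]: "wfx k (QCX c a r) = (wfx k c \<and> wfx k a \<and> wfx k r)"
  by (auto simp: QCX_def)
lemma fok_QCX [simp]: "fok orc (QCX c a r) = (fok orc c \<and> fok orc a \<and> fok orc r)"
  by (auto simp: QCX_def)

lemma eval_nt0: "eval (nt E) env = 0 \<longleftrightarrow> evb E env"
  by (simp add: evb_def)

definition kf :: "nat \<Rightarrow> nat" where
  "kf n = (if n \<in> halting then Suc (LEAST w. VV Q0 w n (list_encode [n])) else 0)"
definition rho :: "nat set \<Rightarrow> nat \<Rightarrow> nat" where
  "rho X u = list_encode (rev (map (chi X) [0..<u]))"
definition prm :: "nat set \<Rightarrow> nat \<Rightarrow> nat" where
  "prm X n = prod_encode (kf n, rho X (kf n))"
definition fD :: "nat set \<Rightarrow> nat \<Rightarrow> nat" where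
  "fD X x = (if qc (pf x) (list_encode [x]) (prm X (ps x)) \<in> halting
     then ps (LEAST w. VV (QT (prm X (ps x))) w (pf x) (list_encode [x])) else 0)"

lemma QT_prm: "QT (prm X n) x z \<longleftrightarrow> x < kf n \<and> z = chi X x"
proof -
  have "x < kf n \<Longrightarrow> nthc (kf n - Suc x) (rho X (kf n)) = chi X x"
    by (simp add: rho_def rev_nth)
  then show ?thesis by (auto simp: QT_def prm_def)
qed

lemma comp_K: "comp_by (chi halting) (chi halting)" by (rule comp_by_orc)

definition "Ek = nt (dsj (eqx (Fn (chi halting) (V 1)) Z) (Cp (VX ocZ) [V 0, V 1, consx (V 1) Z, Z]))"

lemma eval_Ek: "eval Ek [w, n] = 0 \<longleftrightarrow> chi halting n = 0 \<or> VV Q0 w n (list_encode [n])"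
  unfolding Ek_def eval_nt0 by simp

lemma comp_kf: "comp_by (chi halting) kf"
proof -
  have tot: "\<forall>n. \<exists>w. eval Ek [w, n] = 0"
  proof
    fix n show "\<exists>w. eval Ek [w, n] = 0"
    proof (cases "n \<in> halting")
      case True
      then obtain w where "VV Q0 w n (list_encode [n])" using halt_char by blast
      then have "eval Ek [w, n] = 0" by (simp only: eval_Ek) simp
      then show ?thesis by blast
    next
      case False
      then have "eval Ek [0, n] = 0" by (simp only: eval_Ek) (simp add: chi_def)
      then show ?thesis by blast
    qed
  qed
  have c1: "comp_by (chi halting) (\<lambda>n. LEAST w. eval Ek [w, n] = 0)"
    apply (rule mu_comp)
      apply (simp add: Ek_def)
     apply (simp add: Ek_def comp_K)
    apply (rule tot)
    done
  show ?thesis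
  proof (rule ex_comp'[where e = "mul (Fn (chi halting) (V 0)) (S (Fn (\<lambda>n. LEAST w. eval Ek [w, n] = 0) (V 0)))"])
    show "wfx (Suc 0) (mul (Fn (chi halting) (V 0)) (S (Fn (\<lambda>n. LEAST w. eval Ek [w, n] = 0) (V 0))))" by simp
    show "fok (chi halting) (mul (Fn (chi halting) (V 0)) (S (Fn (\<lambda>n. LEAST w. eval Ek [w, n] = 0) (V 0))))"
      using comp_K c1 by simp
  next
    fix n
    show "eval (mul (Fn (chi halting) (V 0)) (S (Fn (\<lambda>n. LEAST w. eval Ek [w, n] = 0) (V 0)))) [n] = kf n"
    proof (cases "n \<in> halting")
      case True
      then have "(\<lambda>w. eval Ek [w, n] = 0) = (\<lambda>w. VV Q0 w n (list_encode [n]))"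
        by (auto simp: eval_Ek chi_def)
      then show ?thesis using True by (simp add: kf_def chi_def)
    next
      case False then show ?thesis by (simp add: kf_def chi_def)
    qed
  qed
qed

definition "RHOX X = Rec (V 0) Z (consx (Fn (chi X) (V 0)) (V 1))"
lemma eval_RHOX [simp]: "eval (RHOX X) [u] = rho X u"
  by (induction u) (simp_all add: RHOX_def rho_def)
lemma wfx_RHOX [simp]: "wfx (Suc 0) (RHOX X)" by (simp add: RHOX_def)
lemma fok_RHOX [simp]: "fok orc (RHOX X) = comp_by orc (chi X)" by (simp add: RHOX_def)

definition "PRMX X t = penc (Fn kf t) (Cp (RHOX X) [Fn kf t])"
lemma eval_PRMX [simp]: "eval (PRMX X t) env = prm X (eval t env)"
  by (simp add: PRMX_def prm_def)
lemma wfx_PRMX [simp]: "wfx k (PRMX X t) = wfx k t" by (simp add: PRMX_def)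
lemma fok_PRMX [simp]: "fok orc (PRMX X t) = (comp_by orc kf \<and> comp_by orc (chi X) \<and> fok orc t)"
  by (auto simp: PRMX_def)

definition "E1 X = nt (dsj (eqx (Fn (chi halting) (QCX (pfx (V 1)) (consx (V 1) Z) (PRMX X (psx (V 1))))) Z)
   (Cp (VX ocT) [V 0, pfx (V 1), consx (V 1) Z, PRMX X (psx (V 1))]))"

lemma eval_E1: "eval (E1 X) [w, x] = 0 \<longleftrightarrow> chi halting (qc (pf x) (list_encode [x]) (prm X (ps x))) = 0 \<or>
    VV (QT (prm X (ps x))) w (pf x) (list_encode [x])"
  unfolding E1_def eval_nt0 by simp

lemma comp_f:
  assumes cX: "comp_by (chi halting) (chi X)"
  shows "comp_by (chi halting) (fD X)"
proof -
  let ?F1 = "\<lambda>x. LEAST w. eval (E1 X) [w, x] = 0"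
  have tot: "\<forall>x. \<exists>w. eval (E1 X) [w, x] = 0"
  proof
    fix x show "\<exists>w. eval (E1 X) [w, x] = 0"
    proof (cases "qc (pf x) (list_encode [x]) (prm X (ps x)) \<in> halting")
      case True
      then obtain w where "VV (QT (prm X (ps x))) w (pf x) (list_encode [x])" using qc_halting by blast
      then have "eval (E1 X) [w, x] = 0" by (simp only: eval_E1) simp
      then show ?thesis by blast
    next
      case False
      then have "eval (E1 X) [0, x] = 0" by (simp only: eval_E1) (simp add: chi_def)
      then show ?thesis by blast
    qed
  qed
  have c1: "comp_by (chi halting) ?F1"
    apply (rule mu_comp)
      apply (simp add: E1_def)
     apply (simp add: E1_def comp_K comp_kf cX)
    apply (rule tot)
    done
  let ?e = "mul (Fn (chi halting) (QCX (pfx (V 0)) (consx (V 0) Z) (PRMX X (psx (V 0))))) (psx (Fn ?F1 (V 0)))"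
  show ?thesis
  proof (rule ex_comp'[where e = ?e])
    show "wfx (Suc 0) ?e" by simp
    show "fok (chi halting) ?e" using comp_K comp_kf cX c1 by simp
  next
    fix x
    show "eval ?e [x] = fD X x"
    proof (cases "qc (pf x) (list_encode [x]) (prm X (ps x)) \<in> halting")
      case True
      then have "(\<lambda>w. eval (E1 X) [w, x] = 0) = (\<lambda>w. VV (QT (prm X (ps x))) w (pf x) (list_encode [x]))"
        by (auto simp: eval_E1 chi_def)
      then show ?thesis using True by (simp add: fD_def chi_def)
    next
      case False then show ?thesis by (simp add: fD_def chi_def)
    qed
  qed
qed

lemma diag:
  assumes g: "comp_by (chi X) g" and gf: "\<forall>x. g x \<noteq> fD X x"
  shows "turing_le halting X"
proof -
  obtain p where p: "\<forall>x. evalo (chi X) p [x] (g x)" using g unfolding comp_by_def by blast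
  define e where "e = enc p"
  define W where "W n = (LEAST w. VV (gr (chi X)) w e (list_encode [prod_encode (e, n)]))" for n
  have Wv: "VV (gr (chi X)) (W n) e (list_encode [prod_encode (e, n)])" for n
  proof -
    have "\<exists>w. VV (gr (chi X)) w e (list_encode [prod_encode (e, n)])"
      using V_complete[OF p[rule_format, of "prod_encode (e, n)"]] unfolding e_def by blast
    then show ?thesis unfolding W_def by (rule LeastI_ex)
  qed
  have kW: "kf n \<le> W n" for n
  proof (rule ccontr)
    assume nk: "\<not> kf n \<le> W n"
    let ?x = "prod_encode (e, n)"
    have "VV (QT (prm X n)) (W n) e (list_encode [?x])"
    proof (rule V_mono[OF Wv])
      show "\<forall>x z. x \<le> W n \<longrightarrow> gr (chi X) x z \<longrightarrow> QT (prm X n) x z"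
        using nk by (auto simp: QT_prm)
    qed
    then have ex: "\<exists>w. VV (QT (prm X n)) w e (list_encode [?x])" by blast
    then have h: "qc e (list_encode [?x]) (prm X n) \<in> halting" using qc_halting by blast
    let ?w1 = "LEAST w. VV (QT (prm X n)) w e (list_encode [?x])"
    have w1: "VV (QT (prm X n)) ?w1 e (list_encode [?x])" using ex by (rule LeastI_ex)
    have "\<forall>x z. QT (prm X n) x z \<longrightarrow> z = chi X x" by (simp add: QT_prm)
    then have "evalo (chi X) p (list_decode (list_encode [?x])) (ps ?w1)" using V_sound[OF w1] e_def by blast
    then have "ps ?w1 = g ?x" using evalo_det p by (metis list_encode_inverse)
    moreover have "fD X ?x = ps ?w1" using h by (simp add: fD_def)
    ultimately show False using gf by metis
  qed
  define Ew where "Ew = nt (Cp (VX (ocG (chi X))) [V 0, cst e, consx (penc (cst e) (V 1)) Z, Z])"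
  have eEw: "eval Ew [w, n] = 0 \<longleftrightarrow> VV (gr (chi X)) w e (list_encode [prod_encode (e, n)])" for w n
    unfolding Ew_def eval_nt0 by simp
  have Weq: "W = (\<lambda>n. LEAST w. eval Ew [w, n] = 0)"
    by (rule ext) (simp only: W_def eEw)
  have cW: "comp_by (chi X) W"
    unfolding Weq
    apply (rule mu_comp)
      apply (simp add: Ew_def)
     apply (simp add: Ew_def comp_by_orc)
    using Wv eEw by blast
  let ?e = "bex (S (Fn W (V 0))) (Cp (VX ocZ) [V 0, V 1, consx (V 1) Z, Z])"
  have "comp_by (chi X) (chi halting)"
  proof (rule ex_comp'[where e = ?e])
    show "wfx (Suc 0) ?e" by simp
    show "fok (chi X) ?e" using cW by simp
  next
    fix n
    have "(\<exists>w<Suc (W n). VV Q0 w n (list_encode [n])) \<longleftrightarrow> n \<in> halting"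
    proof
      assume "\<exists>w<Suc (W n). VV Q0 w n (list_encode [n])"
      then show "n \<in> halting" using halt_char by blast
    next
      assume hn: "n \<in> halting"
      then have ex: "\<exists>w. VV Q0 w n (list_encode [n])" using halt_char by blast
      let ?l = "LEAST w. VV Q0 w n (list_encode [n])"
      have "VV Q0 ?l n (list_encode [n])" using ex by (rule LeastI_ex)
      moreover have "?l < Suc (W n)" using kW[of n] hn by (simp add: kf_def)
      ultimately show "\<exists>w<Suc (W n). VV Q0 w n (list_encode [n])" by blast
    qed
    moreover have hh: "0 < eval (VX ocZ) [w, n, Suc (prod_encode (n, 0)), 0] \<longleftrightarrow> VV Q0 w n (list_encode [n])" for w
    proof -
      have "evb (VX ocZ) [w, n, Suc (prod_encode (n, 0)), 0] \<longleftrightarrow> VV Q0 w n (list_encode [n])" by simp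
      then show ?thesis by (simp add: evb_def)
    qed
    ultimately show "eval ?e [n] = chi halting n" by (simp add: chi_def hh)
  qed
  then show ?thesis by (simp add: turing_le_def)
qed

theorem theorem6:
  fixes X :: "nat set"
  assumes "Delta02_set X"
    and "\<not> turing_le halting X"
  shows "\<exists>f :: nat \<Rightarrow> nat. Delta02_fun f \<and>
           \<not> (\<exists>g :: nat \<Rightarrow> nat. comp_by (chi X) g \<and> (\<forall>x. g x \<noteq> f x))"
proof (intro exI conjI)
  have cX: "comp_by (chi halting) (chi X)" using assms(1) by (simp add: Delta02_set_def Delta02_fun_def)
  show "Delta02_fun (fD X)" unfolding Delta02_fun_def by (rule comp_f[OF cX])
  show "\<not> (\<exists>g :: nat \<Rightarrow> nat. comp_by (chi X) g \<and> (\<forall>x. g x \<noteq> fD X x))"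
    using diag assms(2) by blast
qed

end
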